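(* Assume $f$ is odd. Then $\tau_q|_{Q_8\rtimes\mathbb{Z}}\simeq \operatorname{Ind}_C^{Q_8\rtimes\mathbb{Z}}\phi_1$.
   Context: All representations are over $\overline{\mathbb{Q}}_\ell$, $\ell$ an odd prime. Let $q=2^f$. Let $Q\subset \mathit{GL}_3(\mathbb{F}_4)$ be the group of matrices $g(\alpha,\beta,\gamma)=\begin{pmatrix}\alpha&\beta&\gamma\\0&\alpha^2&\beta^2\\0&0&\alpha\end{pmatrix}$ with $\alpha\in\mathbb{F}_4^\times$, $\beta,\gamma\in\mathbb{F}_4$, $\alpha\gamma^2+\alpha^2\gamma=\beta^3$. Let $Q\rtimes\mathbb{Z}$ be the semidirect product where $r\in\mathbb{Z}$ acts by $g(\alpha,\beta,\gamma)\mapsto g(\alpha^{q^r},\beta^{q^r},\gamma^{q^r})$. Fix $\bar\zeta_3\in\mathbb{F}_4\setminus\mathbb{F}_2$. Let $Q_8=\{g(1,\beta,\gamma)\in Q\}$; $C_4\subset Q_8$ the cyclic subgroup of order 4 generated by $g(1,1,\bar\zeta_3)$; $Z=\{g(1,0,0),g(1,0,1)\}$; $C_3=\{g(\alpha,0,0)\}$; $C_6=Z\times C_3$. Fix a faithful character $\phi$ of $C_4$ and $(-2)^{1/2}\in\overline{\mathbb{Q}}_\ell$, with $(-2)^{m/2}=((-2)^{1/2})^m$. Let $C\subset Q_8\rtimes\mathbb{Z}$ be the subgroup of $(g,n)$ with $g\in C_4$ if $n$ even and $g\in Q_8\setminus C_4$ if $n$ odd. Fix $\eta$ with $\eta^2+(-2)^{(f+1)/2}\eta+q=0$;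 let $\phi_1$ be the character of $C$ with $\phi_1((g(1,\bar\zeta_3,\bar\zeta_3),1))=\eta q^{-1}$, $\phi_1((g(1,0,0),2))=-q^{-1}$. Let $\phi_2$ be the character of $C_6\rtimes\mathbb{Z}$ with $\phi_2|_{C_6}=\phi|_Z\otimes 1_{C_3}$ and $\phi_2((g(1,0,0),1))=(-2)^{f/2}q^{-1}$. There is a surjective $Q\rtimes\mathbb{Z}$-homomorphism $\Psi\colon\operatorname{Ind}_C^{Q\rtimes\mathbb{Z}}\phi_1\to\operatorname{Ind}_{C_6\rtimes\mathbb{Z}}^{Q\rtimes\mathbb{Z}}\phi_2$, and the space of such homomorphisms is one-dimensional; $\tau_q$ is defined as the kernel of $\Psi$ (a two-dimensional representation of $Q\rtimes\mathbb{Z}$). *)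

theory Defs
  imports Complex_Main
begin

text \<open>F_4 is modelled as pairs (a,b) of bits standing for a + b*z, where z is the fixed
  element of F_4 outside F_2 (so z^2 = z + 1). Addition is xor, multiplication as below.\<close>

type_synonym f4 = "bool \<times> bool"

definition f4_zero :: f4 where "f4_zero = (False, False)"
definition f4_one :: f4 where "f4_one = (True, False)"
definition f4_zeta :: f4 where "f4_zeta = (False, True)"

fun f4_add :: "f4 \<Rightarrow> f4 \<Rightarrow> f4" where
  "f4_add (a, b) (c, d) = (a \<noteq> c, b \<noteq> d)"

fun f4_mul :: "f4 \<Rightarrow> f4 \<Rightarrow> f4" where
  "f4_mul (a, b) (c, d) = ((a \<and> c) \<noteq> (b \<and> d), ((a \<and> d) \<noteq> (b \<and> c)) \<noteq> (b \<and> d))"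

definition f4_pow :: "f4 \<Rightarrow> nat \<Rightarrow> f4" where
  "f4_pow x k = ((f4_mul x) ^^ k) f4_one"

definition f4_frob :: "f4 \<Rightarrow> f4" where
  "f4_frob x = f4_pow x 2"

text \<open>x \<mapsto> x^(q^r) for q = 2^f and r an integer: this is the (f*r)-th power of the
  absolute Frobenius, which only depends on f*r mod 2.\<close>
definition frobq :: "nat \<Rightarrow> int \<Rightarrow> f4 \<Rightarrow> f4" where
  "frobq f r x = (f4_frob ^^ nat ((int f * r) mod 2)) x"

type_synonym mat3 = "nat \<Rightarrow> nat \<Rightarrow> f4"

definition mat_mul :: "mat3 \<Rightarrow> mat3 \<Rightarrow> mat3" where
  "mat_mul A B = (\<lambda>i j. f4_add (f4_mul (A i 0) (B 0 j))
                        (f4_add (f4_mul (A i 1) (B 1 j)) (f4_mul (A i 2) (B 2 j))))"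

definition gmat :: "f4 \<Rightarrow> f4 \<Rightarrow> f4 \<Rightarrow> mat3" where
  "gmat a b c = (\<lambda>i j.
      if i = 0 \<and> j = 0 then a
      else if i = 0 \<and> j = 1 then b
      else if i = 0 \<and> j = 2 then c
      else if i = 1 \<and> j = 1 then f4_pow a 2
      else if i = 1 \<and> j = 2 then f4_pow b 2
      else if i = 2 \<and> j = 2 then a
      else f4_zero)"

definition Qgrp :: "mat3 set" where
  "Qgrp = {gmat a b c | a b c. a \<noteq> f4_zero \<and>
      f4_add (f4_mul a (f4_pow c 2)) (f4_mul (f4_pow a 2) c) = f4_pow b 3}"

definition mat_pow :: "mat3 \<Rightarrow> nat \<Rightarrow> mat3" where
  "mat_pow A k = ((mat_mul A) ^^ k) (gmat f4_one f4_zero f4_zero)"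

definition Q8 :: "mat3 set" where
  "Q8 = {M \<in> Qgrp. \<exists>b c. M = gmat f4_one b c}"

definition C4 :: "mat3 set" where
  "C4 = {mat_pow (gmat f4_one f4_one f4_zeta) k | k. True}"

definition Zgrp :: "mat3 set" where
  "Zgrp = {gmat f4_one f4_zero f4_zero, gmat f4_one f4_zero f4_one}"

definition C3 :: "mat3 set" where
  "C3 = {gmat a f4_zero f4_zero | a. a \<noteq> f4_zero}"

definition C6 :: "mat3 set" where
  "C6 = {mat_mul z c | z c. z \<in> Zgrp \<and> c \<in> C3}"

definition frob_mat :: "nat \<Rightarrow> int \<Rightarrow> mat3 \<Rightarrow> mat3" where
  "frob_mat f r A = (\<lambda>i j. frobq f r (A i j))"

fun sd_mul :: "nat \<Rightarrow> mat3 \<times> int \<Rightarrow> mat3 \<times> int \<Rightarrow> mat3 \<times> int" where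
  "sd_mul f (A, m) (B, n) = (mat_mul A (frob_mat f m B), m + n)"

definition QZ :: "(mat3 \<times> int) set" where
  "QZ = Qgrp \<times> UNIV"

definition Q8Z :: "(mat3 \<times> int) set" where
  "Q8Z = Q8 \<times> UNIV"

definition C6Z :: "(mat3 \<times> int) set" where
  "C6Z = C6 \<times> UNIV"

definition Cgrp :: "(mat3 \<times> int) set" where
  "Cgrp = {(g, n). (even n \<and> g \<in> C4) \<or> (odd n \<and> g \<in> Q8 - C4)}"

definition is_character :: "nat \<Rightarrow> (mat3 \<times> int) set \<Rightarrow> (mat3 \<times> int \<Rightarrow> complex) \<Rightarrow> bool" where
  "is_character f H \<chi> \<longleftrightarrow> (\<forall>x\<in>H. \<chi> x \<noteq> 0) \<and>
      (\<forall>x\<in>H. \<forall>y\<in>H. \<chi> (sd_mul f x y) = \<chi> x * \<chi> y)"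

text \<open>Model of Ind_H^G \<chi>: functions F on G (zero outside G) with F(h x) = \<chi>(h) F(x),
  G acting by right translation.\<close>
definition Ind :: "nat \<Rightarrow> (mat3 \<times> int) set \<Rightarrow> (mat3 \<times> int \<Rightarrow> complex)
                     \<Rightarrow> (mat3 \<times> int) set \<Rightarrow> (mat3 \<times> int \<Rightarrow> complex) set" where
  "Ind f H \<chi> G = {F. (\<forall>x. x \<notin> G \<longrightarrow> F x = 0) \<and>
                      (\<forall>h\<in>H. \<forall>x\<in>G. F (sd_mul f h x) = \<chi> h * F x)}"

definition ract :: "nat \<Rightarrow> (mat3 \<times> int) set \<Rightarrow> mat3 \<times> int
                      \<Rightarrow> (mat3 \<times> int \<Rightarrow> complex) \<Rightarrow> (mat3 \<times> int \<Rightarrow> complex)" where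
  "ract f G g F = (\<lambda>x. if x \<in> G then F (sd_mul f x g) else 0)"

definition rep_hom :: "'g set \<Rightarrow> ('g \<Rightarrow> ('x \<Rightarrow> complex) \<Rightarrow> ('x \<Rightarrow> complex))
     \<Rightarrow> ('g \<Rightarrow> ('y \<Rightarrow> complex) \<Rightarrow> ('y \<Rightarrow> complex))
     \<Rightarrow> ('x \<Rightarrow> complex) set \<Rightarrow> ('y \<Rightarrow> complex) set
     \<Rightarrow> (('x \<Rightarrow> complex) \<Rightarrow> ('y \<Rightarrow> complex)) \<Rightarrow> bool" where
  "rep_hom G actV actW V W \<Psi> \<longleftrightarrow>
     (\<forall>F\<in>V. \<Psi> F \<in> W) \<and>
     (\<forall>F1\<in>V. \<forall>F2\<in>V. \<Psi> (\<lambda>x. F1 x + F2 x) = (\<lambda>y. \<Psi> F1 y + \<Psi> F2 y)) \<and>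
     (\<forall>c. \<forall>F\<in>V. \<Psi> (\<lambda>x. c * F x) = (\<lambda>y. c * \<Psi> F y)) \<and>
     (\<forall>g\<in>G. \<forall>F\<in>V. \<Psi> (actV g F) = actW g (\<Psi> F))"

definition rep_iso where
  "rep_iso G actV actW V W \<Phi> \<longleftrightarrow> rep_hom G actV actW V W \<Phi> \<and> bij_betw \<Phi> V W"

end

theory Submission
  imports Defs
begin


definition f4_zeta2 :: f4 where "f4_zeta2 = (True, True)"

lemma f4_exhaust: "x = f4_zero \<or> x = f4_one \<or> x = f4_zeta \<or> x = f4_zeta2"
  unfolding f4_zero_def f4_one_def f4_zeta_def f4_zeta2_def
  by (cases x) auto

lemma f4_pow2: "f4_pow x 2 = f4_mul x x"
proof -
  obtain a b where x: "x = (a,b)" by (cases x)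
  show ?thesis unfolding f4_pow_def x f4_one_def by (simp add: numeral_2_eq_2) 
qed

lemma f4_pow3: "f4_pow x 3 = f4_mul x (f4_mul x x)"
proof -
  obtain a b where x: "x = (a,b)" by (cases x)
  show ?thesis unfolding f4_pow_def x f4_one_def by (simp add: numeral_3_eq_3) 
qed

lemma f4_frob_eq: "f4_frob x = f4_mul x x"
  unfolding f4_frob_def f4_pow2 ..


lemma f4_add_assoc: "f4_add (f4_add x y) z = f4_add x (f4_add y z)"
  by (cases x; cases y; cases z) auto
lemma f4_add_comm: "f4_add x y = f4_add y x"
  by (cases x; cases y) auto
lemma f4_add_lcomm: "f4_add x (f4_add y z) = f4_add y (f4_add x z)"
  by (cases x; cases y; cases z) auto
lemma f4_mul_assoc: "f4_mul (f4_mul x y) z = f4_mul x (f4_mul y z)"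
  by (cases x; cases y; cases z) auto
lemma f4_mul_comm: "f4_mul x y = f4_mul y x"
  by (cases x; cases y) auto
lemma f4_mul_lcomm: "f4_mul x (f4_mul y z) = f4_mul y (f4_mul x z)"
  by (cases x; cases y; cases z) auto
lemma f4_distl: "f4_mul x (f4_add y z) = f4_add (f4_mul x y) (f4_mul x z)"
  by (cases x; cases y; cases z) auto
lemma f4_distr: "f4_mul (f4_add y z) x = f4_add (f4_mul y x) (f4_mul z x)"
  by (cases x; cases y; cases z) auto
lemma f4_mul_zero[simp]: "f4_mul x f4_zero = f4_zero" "f4_mul f4_zero x = f4_zero"
  unfolding f4_zero_def by (cases x; auto)+
lemma f4_add_zero[simp]: "f4_add x f4_zero = x" "f4_add f4_zero x = x"
  unfolding f4_zero_def by (cases x; auto)+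
lemma f4_mul_one[simp]: "f4_mul x f4_one = x" "f4_mul f4_one x = x"
  unfolding f4_one_def by (cases x; auto)+

lemmas f4_ring = f4_add_assoc f4_add_comm f4_add_lcomm f4_mul_assoc f4_mul_comm f4_mul_lcomm
  f4_distl f4_distr

lemma frob_add: "f4_frob (f4_add x y) = f4_add (f4_frob x) (f4_frob y)"
  unfolding f4_frob_eq by (cases x; cases y) auto
lemma frob_mul: "f4_frob (f4_mul x y) = f4_mul (f4_frob x) (f4_frob y)"
  unfolding f4_frob_eq by (cases x; cases y) auto
lemma frob_frob: "f4_frob (f4_frob x) = x"
  unfolding f4_frob_eq by (cases x) auto
lemma frob_zero[simp]: "f4_frob f4_zero = f4_zero"
  unfolding f4_frob_eq by simp
lemma frob_one[simp]: "f4_frob f4_one = f4_one"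
  unfolding f4_frob_eq by simp

lemma frobq_eq: "frobq f r x = (if odd (int f * r) then f4_frob x else x)"
proof -
  have "(int f * r) mod 2 = 0 \<or> (int f * r) mod 2 = 1" by auto
  then show ?thesis unfolding frobq_def
    by (auto simp: odd_iff_mod_2_eq_one)
qed

lemma frobq_add: "frobq f r (f4_add x y) = f4_add (frobq f r x) (frobq f r y)"
  by (simp add: frobq_eq frob_add)
lemma frobq_mul: "frobq f r (f4_mul x y) = f4_mul (frobq f r x) (frobq f r y)"
  by (simp add: frobq_eq frob_mul)
lemma frobq_zero[simp]: "frobq f r f4_zero = f4_zero"
  by (simp add: frobq_eq)
lemma frobq_one[simp]: "frobq f r f4_one = f4_one"
  by (simp add: frobq_eq)
lemma frobq_comp: "frobq f m (frobq f n x) = frobq f (m + n) x"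
  by (auto simp: frobq_eq frob_frob algebra_simps)

lemma frobq_pow2: "frobq f r (f4_pow x 2) = f4_pow (frobq f r x) 2"
  by (simp add: f4_pow2 frobq_mul)

lemma mat_mul_assoc: "mat_mul (mat_mul A B) C = mat_mul A (mat_mul B C)"
  unfolding mat_mul_def by (rule ext, rule ext) (simp add: f4_ring)

lemma frob_mat_mul: "frob_mat f r (mat_mul A B) = mat_mul (frob_mat f r A) (frob_mat f r B)"
  unfolding mat_mul_def frob_mat_def by (simp add: frobq_add frobq_mul)

lemma frob_mat_comp: "frob_mat f m (frob_mat f n A) = frob_mat f (m + n) A"
  unfolding frob_mat_def by (simp add: frobq_comp)

lemma sd_mul_assoc: "sd_mul f (sd_mul f x y) z = sd_mul f x (sd_mul f y z)"
  by (cases x; cases y; cases z) (simp add: mat_mul_assoc frob_mat_mul frob_mat_comp add.assoc)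


lemma f4_cases[case_names z o t t2]: "(x = f4_zero \<Longrightarrow> P) \<Longrightarrow> (x = f4_one \<Longrightarrow> P) \<Longrightarrow> (x = f4_zeta \<Longrightarrow> P) \<Longrightarrow> (x = f4_zeta2 \<Longrightarrow> P) \<Longrightarrow> P"
  using f4_exhaust by blast
lemmas f4c = f4_zero_def f4_one_def f4_zeta_def f4_zeta2_def
lemma E11: "f4_mul (f4_pow a 2) (f4_pow a' 2) = f4_pow (f4_mul a a') 2"
  unfolding f4_pow2 by (cases a rule: f4_cases; cases a' rule: f4_cases) (simp_all add: f4c)
lemma E12: "f4_add (f4_pow (f4_mul a b') 2) (f4_mul (f4_pow b 2) a')
   = f4_pow (f4_add (f4_mul a b') (f4_mul b (f4_pow a' 2))) 2"
  unfolding f4_pow2 by (cases a rule: f4_cases; cases a' rule: f4_cases; cases b rule: f4_cases; cases b' rule: f4_cases) (simp_all add: f4c)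
lemma gmat_mul: "mat_mul (gmat a b c) (gmat a' b' c') =
  gmat (f4_mul a a') (f4_add (f4_mul a b') (f4_mul b (f4_pow a' 2)))
       (f4_add (f4_mul a c') (f4_add (f4_mul b (f4_pow b' 2)) (f4_mul c a')))"
proof (intro ext)
  fix i j :: nat
  consider "i = 0" | "i = 1" | "i = 2" | "i > 2" by linarith
  moreover consider "j = 0" | "j = 1" | "j = 2" | "j > 2" by linarith
  ultimately show "mat_mul (gmat a b c) (gmat a' b' c') i j = gmat (f4_mul a a') (f4_add (f4_mul a b') (f4_mul b (f4_pow a' 2)))
       (f4_add (f4_mul a c') (f4_add (f4_mul b (f4_pow b' 2)) (f4_mul c a'))) i j"
    by cases (simp_all add: mat_mul_def gmat_def E11 E12)
qed
lemma frob_gmat: "frob_mat f r (gmat a b c) = gmat (frobq f r a) (frobq f r b) (frobq f r c)"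
proof (intro ext)
  fix i j :: nat
  show "frob_mat f r (gmat a b c) i j = gmat (frobq f r a) (frobq f r b) (frobq f r c) i j"
    unfolding frob_mat_def gmat_def by (simp add: frobq_pow2)
qed
lemma sd_mul_gmat: "sd_mul f (gmat a b c, m) (gmat a' b' c', n) =
   (let a' = frobq f m a'; b' = frobq f m b'; c' = frobq f m c' in
   (gmat (f4_mul a a') (f4_add (f4_mul a b') (f4_mul b (f4_pow a' 2)))
       (f4_add (f4_mul a c') (f4_add (f4_mul b (f4_pow b' 2)) (f4_mul c a'))), m + n))"
  by (simp add: frob_gmat gmat_mul Let_def)

lemma gmat_eq: "gmat a b c = gmat a' b' c' \<longleftrightarrow> a = a' \<and> b = b' \<and> c = c'"
proof
  assume h: "gmat a b c = gmat a' b' c'"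
  have "gmat a b c 0 0 = gmat a' b' c' 0 0" "gmat a b c 0 1 = gmat a' b' c' 0 1"
       "gmat a b c 0 2 = gmat a' b' c' 0 2" using h by auto
  then show "a = a' \<and> b = b' \<and> c = c'" unfolding gmat_def by simp
qed simp
definition Qt :: "f4 \<Rightarrow> f4 \<Rightarrow> f4 \<Rightarrow> bool" where
  "Qt a b c \<longleftrightarrow> a \<noteq> f4_zero \<and> f4_add (f4_mul a (f4_pow c 2)) (f4_mul (f4_pow a 2) c) = f4_pow b 3"
lemma Qt_cases: "Qt a b c \<Longrightarrow> (a = f4_one \<and> b = f4_zero \<and> c = f4_zero \<Longrightarrow> P) \<Longrightarrow> (a = f4_one \<and> b = f4_zero \<and> c = f4_one \<Longrightarrow> P) \<Longrightarrow> (a = f4_one \<and> b = f4_one \<and> c = f4_zeta \<Longrightarrow> P) \<Longrightarrow> (a = f4_one \<and> b = f4_one \<and> c = f4_zeta2 \<Longrightarrow> P) \<Longrightarrow> (a = f4_one \<and> b = f4_zeta \<and> c = f4_zeta \<Longrightarrow> P) \<Longrightarrow> (a = f4_one \<and> b = f4_zeta \<and> c = f4_zeta2 \<Longrightarrow> P) \<Longrightarrow> (a = f4_one \<and> b = f4_zeta2 \<and> c = f4_zeta \<Longrightarrow> P) \<Longrightarrow> (a = f4_one \<and> b = f4_zeta2 \<and> c = f4_zeta2 \<Longrightarrow> P) \<Longrightarrow> (a = f4_zeta \<and> b = f4_zero \<and> c = f4_zero \<Longrightarrow> P) \<Longrightarrow> (a = f4_zeta \<and> b = f4_zero \<and> c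 = f4_zeta \<Longrightarrow> P) \<Longrightarrow> (a = f4_zeta \<and> b = f4_one \<and> c = f4_one \<Longrightarrow> P) \<Longrightarrow> (a = f4_zeta \<and> b = f4_one \<and> c = f4_zeta2 \<Longrightarrow> P) \<Longrightarrow> (a = f4_zeta \<and> b = f4_zeta \<and> c = f4_one \<Longrightarrow> P) \<Longrightarrow> (a = f4_zeta \<and> b = f4_zeta \<and> c = f4_zeta2 \<Longrightarrow> P) \<Longrightarrow> (a = f4_zeta \<and> b = f4_zeta2 \<and> c = f4_one \<Longrightarrow> P) \<Longrightarrow> (a = f4_zeta \<and> b = f4_zeta2 \<and> c = f4_zeta2 \<Longrightarrow> P) \<Longrightarrow> (a = f4_zeta2 \<and> b = f4_zero \<and> c = f4_zero \<Longrightarrow> P) \<Longrightarrow> (a = f4_zeta2 \<and> b = f4_zero \<and> c = f4_zeta2 \<Longrightarrow> P) \<Longrightarrow> (a = f4_zeta2 \<and> b = f4_one \<and> c = f4_one \<Longrightarrow> P) \<Longrightarrow> (a = f4_zeta2 \<and> b = f4_one \<and> c = f4_zeta \<Longrightarrow> P) \<Longrightarrow> (a = f4_zeta2 \<and> b = f4_zeta \<and> c = f4_one \<Longrightarrow> P) \<Longrightarrow> (a = f4_zeta2 \<and> b = f4_zeta \<and> c = f4_zeta \<Longrightarrow> P) \<Longrightarrow> (a = f4_zeta2 \<and> b = f4_zeta2 \<and> c = f4_one \<Longrightarrow> P) \<Longrightarrow> (a = f4_zeta2 \<and> b = f4_zeta2 \<and> c = f4_zeta \<Longrightarrow> P) \<Longrightarrow>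 P"
  unfolding Qt_def f4_pow2 f4_pow3
  by (cases a rule: f4_cases; cases b rule: f4_cases; cases c rule: f4_cases) (simp_all add: f4c)
lemma Qt_mul: "Qt a b c \<Longrightarrow> Qt a' b' c' \<Longrightarrow> Qt (f4_mul a a') (f4_add (f4_mul a b') (f4_mul b (f4_pow a' 2)))
       (f4_add (f4_mul a c') (f4_add (f4_mul b (f4_pow b' 2)) (f4_mul c a')))"
  apply (erule Qt_cases; erule Qt_cases)
  apply (simp_all add: Qt_def f4_pow2 f4_pow3 f4c)
  done

lemma frobq_odd: "odd f \<Longrightarrow> frobq f n x = (if odd n then f4_frob x else x)"
  by (simp add: frobq_eq)

lemma Qt_frob: "Qt a b c \<Longrightarrow> Qt (f4_frob a) (f4_frob b) (f4_frob c)"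
  by (erule Qt_cases) (simp_all add: Qt_def f4_pow2 f4_pow3 f4_frob_eq f4c)

lemma Qt_frobq: "Qt a b c \<Longrightarrow> Qt (frobq f n a) (frobq f n b) (frobq f n c)"
  by (simp add: frobq_eq Qt_frob)

lemma gmat_Qgrp: "gmat a b c \<in> Qgrp \<longleftrightarrow> Qt a b c"
  unfolding Qgrp_def Qt_def mem_Collect_eq gmat_eq by blast

lemma Qgrp_E: "M \<in> Qgrp \<Longrightarrow> \<exists>a b c. M = gmat a b c \<and> Qt a b c"
  unfolding Qgrp_def Qt_def by auto

lemma QZ_gm: "(gmat a b c, n) \<in> QZ \<longleftrightarrow> Qt a b c"
  unfolding QZ_def by (simp add: gmat_Qgrp)

lemma QZ_E: "x \<in> QZ \<Longrightarrow> \<exists>a b c n. x = (gmat a b c, n) \<and> Qt a b c"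
  unfolding QZ_def using Qgrp_E by (cases x) auto

lemma QZ_mul: "x \<in> QZ \<Longrightarrow> y \<in> QZ \<Longrightarrow> sd_mul f x y \<in> QZ"
proof -
  assume x: "x \<in> QZ" and y: "y \<in> QZ"
  obtain a b c m where xe: "x = (gmat a b c, m)" and qx: "Qt a b c" using QZ_E[OF x] by blast
  obtain a' b' c' n where ye: "y = (gmat a' b' c', n)" and qy: "Qt a' b' c'" using QZ_E[OF y] by blast
  show ?thesis unfolding xe ye sd_mul_gmat Let_def QZ_gm
    by (rule Qt_mul[OF qx Qt_frobq[OF qy]])
qed

definition e1 :: "mat3 \<times> int" where "e1 = (gmat f4_one f4_zero f4_zero, 0)"

lemma e1_QZ: "e1 \<in> QZ"
  unfolding e1_def QZ_gm Qt_def by (simp add: f4_pow2 f4_pow3 f4c)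

lemma e1_left: "sd_mul f e1 (gmat a b c, n) = (gmat a b c, n)"
  unfolding e1_def sd_mul_gmat Let_def by (simp add: frobq_eq)

lemma e1_right: "sd_mul f (gmat a b c, n) e1 = (gmat a b c, n)"
  unfolding e1_def sd_mul_gmat Let_def by (simp add: f4_pow2)

lemma e1_left_QZ: "x \<in> QZ \<Longrightarrow> sd_mul f e1 x = x"
  using QZ_E e1_left by blast
lemma e1_right_QZ: "x \<in> QZ \<Longrightarrow> sd_mul f x e1 = x"
  using QZ_E e1_right by blast

definition invA :: "f4 \<Rightarrow> f4" where "invA a = f4_pow a 2"
definition invC :: "f4 \<Rightarrow> f4 \<Rightarrow> f4 \<Rightarrow> f4" where
  "invC a b c = f4_add (f4_mul (f4_pow a 2) (f4_pow b 3)) (f4_mul a c)"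

lemma inv_t_Qt: "Qt a b c \<Longrightarrow> Qt (invA a) b (invC a b c)"
  by (erule Qt_cases) (simp_all add: invA_def invC_def Qt_def f4_pow2 f4_pow3 f4c)
lemma inv_t_r: "Qt a b c \<Longrightarrow> mat_mul (gmat a b c) (gmat (invA a) b (invC a b c)) = gmat f4_one f4_zero f4_zero"
  by (erule Qt_cases) (simp_all add: gmat_mul invA_def invC_def f4_pow2 f4_pow3 f4c)
lemma inv_t_l: "Qt a b c \<Longrightarrow> mat_mul (gmat (invA a) b (invC a b c)) (gmat a b c) = gmat f4_one f4_zero f4_zero"
  by (erule Qt_cases) (simp_all add: gmat_mul invA_def invC_def f4_pow2 f4_pow3 f4c)

definition qinv :: "nat \<Rightarrow> mat3 \<times> int \<Rightarrow> mat3 \<times> int" where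
  "qinv f x = (frob_mat f (snd x) (gmat (invA (fst x 0 0)) (fst x 0 1) (invC (fst x 0 0) (fst x 0 1) (fst x 0 2))), - snd x)"

lemma qinv_gm: "qinv f (gmat a b c, n) = (frob_mat f n (gmat (invA a) b (invC a b c)), - n)"
  unfolding qinv_def by (simp add: gmat_def)

lemma frob_I: "frob_mat f n (gmat f4_one f4_zero f4_zero) = gmat f4_one f4_zero f4_zero"
  by (simp add: frob_gmat)

lemma frobq_neg: "frobq f (- n) x = frobq f n x"
  by (simp add: frobq_eq)
lemma frob_mat_neg: "frob_mat f (- n) A = frob_mat f n A"
  unfolding frob_mat_def by (simp add: frobq_neg)
lemma frob_mat_twice: "frob_mat f n (frob_mat f n A) = A"
  unfolding frob_mat_comp unfolding frob_mat_def by (simp add: frobq_eq)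

lemma qinv_QZ: "x \<in> QZ \<Longrightarrow> qinv f x \<in> QZ"
  using QZ_E[of x] by (auto simp: qinv_gm frob_gmat QZ_gm intro!: Qt_frobq inv_t_Qt)

lemma qinv_r: "x \<in> QZ \<Longrightarrow> sd_mul f x (qinv f x) = e1"
  using QZ_E[of x] by (auto simp: qinv_gm frob_mat_twice inv_t_r e1_def)

lemma qinv_l: "x \<in> QZ \<Longrightarrow> sd_mul f (qinv f x) x = e1"
  using QZ_E[of x]
  by (auto simp: qinv_gm frob_mat_neg e1_def frob_mat_mul[symmetric] inv_t_l frob_I)


declare split_paired_All [simp del] split_paired_Ex [simp del]

abbreviation "I3 \<equiv> gmat f4_one f4_zero f4_zero"
abbreviation "uM \<equiv> gmat f4_one f4_one f4_zeta"

definition C4t :: "f4 \<Rightarrow> f4 \<Rightarrow> f4 \<Rightarrow> bool" where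
  "C4t a b c \<longleftrightarrow> a = f4_one \<and> ((b = f4_zero \<and> c = f4_zero) \<or> (b = f4_one \<and> c = f4_zeta)
      \<or> (b = f4_zero \<and> c = f4_one) \<or> (b = f4_one \<and> c = f4_zeta2))"

lemma mat_pow_Suc: "mat_pow A (Suc k) = mat_mul A (mat_pow A k)"
  unfolding mat_pow_def by simp
lemma mat_pow_0: "mat_pow A 0 = I3"
  unfolding mat_pow_def by simp

lemma C4_list: "C4 = {gmat f4_one f4_zero f4_zero, gmat f4_one f4_one f4_zeta,
                     gmat f4_one f4_zero f4_one, gmat f4_one f4_one f4_zeta2}" (is "_ = ?S")
proof
  have "mat_pow uM k \<in> ?S" for k
  proof (induction k)
    case 0 then show ?case by (simp add: mat_pow_0)
  next
    case (Suc k) then show ?case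
      by (auto simp: mat_pow_Suc gmat_mul f4_pow2 f4c)
  qed
  then show "C4 \<subseteq> ?S" unfolding C4_def by auto
next
  have p0: "mat_pow uM 0 = I3" by (simp add: mat_pow_0)
  have p1: "mat_pow uM (Suc 0) = uM" unfolding mat_pow_Suc p0 by (simp add: gmat_mul f4_pow2 f4c)
  have p2: "mat_pow uM (Suc (Suc 0)) = gmat f4_one f4_zero f4_one" unfolding mat_pow_Suc[of _ "Suc 0"] p1 by (simp add: gmat_mul f4_pow2 f4c)
  have p3: "mat_pow uM (Suc (Suc (Suc 0))) = gmat f4_one f4_one f4_zeta2" unfolding mat_pow_Suc[of _ "Suc (Suc 0)"] p2 by (simp add: gmat_mul f4_pow2 f4c)
  show "?S \<subseteq> C4" unfolding C4_def using p0 p1 p2 p3 by (auto simp del: One_nat_def) (metis)+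
qed


lemma C4_gm: "gmat a b c \<in> C4 \<longleftrightarrow> C4t a b c"
  unfolding C4_list C4t_def by (auto simp: gmat_eq)

lemma Q8_gm: "gmat a b c \<in> Q8 \<longleftrightarrow> Qt a b c \<and> a = f4_one"
  unfolding Q8_def by (auto simp: gmat_Qgrp gmat_eq)

definition Ct :: "int \<Rightarrow> f4 \<Rightarrow> f4 \<Rightarrow> f4 \<Rightarrow> bool" where
  "Ct n a b c \<longleftrightarrow> (even n \<and> C4t a b c) \<or> (odd n \<and> Qt a b c \<and> a = f4_one \<and> \<not> C4t a b c)"

lemma C_gm: "(gmat a b c, n) \<in> Cgrp \<longleftrightarrow> Ct n a b c"
  unfolding Cgrp_def Ct_def by (auto simp: C4_gm Q8_gm)

lemma C4_E: "M \<in> C4 \<Longrightarrow> \<exists>a b c. M = gmat a b c"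
  unfolding C4_list by auto

lemma C_E: "x \<in> Cgrp \<Longrightarrow> \<exists>a b c n. x = (gmat a b c, n) \<and> Ct n a b c"
proof -
  assume x: "x \<in> Cgrp"
  obtain M n where xe: "x = (M, n)" by (cases x)
  have "M \<in> C4 \<or> M \<in> Q8" using x unfolding xe Cgrp_def by auto
  then obtain a b c where "M = gmat a b c"
    using C4_E unfolding Q8_def by blast
  then show ?thesis using x xe C_gm by blast
qed

lemma C4t_Qt: "C4t a b c \<Longrightarrow> Qt a b c"
  unfolding C4t_def Qt_def by (elim conjE disjE) (simp_all add: f4_pow2 f4_pow3 f4c)

lemma Ct_Qt: "Ct n a b c \<Longrightarrow> Qt a b c"
  unfolding Ct_def using C4t_Qt by blast

lemma C_QZ: "x \<in> Cgrp \<Longrightarrow> x \<in> QZ"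
  using C_E Ct_Qt QZ_gm by blast

lemma Ct_cases:
  assumes "Ct n a b c"
  "(even n \<Longrightarrow> a = f4_one \<Longrightarrow> b = f4_zero \<Longrightarrow> c = f4_zero \<Longrightarrow> P)"
  "(even n \<Longrightarrow> a = f4_one \<Longrightarrow> b = f4_one \<Longrightarrow> c = f4_zeta \<Longrightarrow> P)"
  "(even n \<Longrightarrow> a = f4_one \<Longrightarrow> b = f4_zero \<Longrightarrow> c = f4_one \<Longrightarrow> P)"
  "(even n \<Longrightarrow> a = f4_one \<Longrightarrow> b = f4_one \<Longrightarrow> c = f4_zeta2 \<Longrightarrow> P)"
  "(odd n \<Longrightarrow> a = f4_one \<Longrightarrow> b = f4_zeta \<Longrightarrow> c = f4_zeta \<Longrightarrow> P)"
  "(odd n \<Longrightarrow> a = f4_one \<Longrightarrow> b = f4_zeta \<Longrightarrow> c = f4_zeta2 \<Longrightarrow> P)"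
  "(odd n \<Longrightarrow> a = f4_one \<Longrightarrow> b = f4_zeta2 \<Longrightarrow> c = f4_zeta \<Longrightarrow> P)"
  "(odd n \<Longrightarrow> a = f4_one \<Longrightarrow> b = f4_zeta2 \<Longrightarrow> c = f4_zeta2 \<Longrightarrow> P)"
  shows P
proof -
  have odd_cases: "Qt a b c \<Longrightarrow> a = f4_one \<Longrightarrow> \<not> C4t a b c \<Longrightarrow>
     (b = f4_zeta \<and> c = f4_zeta) \<or> (b = f4_zeta \<and> c = f4_zeta2) \<or> (b = f4_zeta2 \<and> c = f4_zeta) \<or> (b = f4_zeta2 \<and> c = f4_zeta2)"
    by (erule Qt_cases) (simp_all add: C4t_def f4c)
  from assms(1) have "(even n \<and> C4t a b c) \<or> (odd n \<and> Qt a b c \<and> a = f4_one \<and> \<not> C4t a b c)"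
    unfolding Ct_def .
  then show ?thesis
  proof
    assume h: "even n \<and> C4t a b c"
    then have "a = f4_one" "(b = f4_zero \<and> c = f4_zero) \<or> (b = f4_one \<and> c = f4_zeta)
      \<or> (b = f4_zero \<and> c = f4_one) \<or> (b = f4_one \<and> c = f4_zeta2)" unfolding C4t_def by auto
    then show P using h assms(2-5) by blast
  next
    assume h: "odd n \<and> Qt a b c \<and> a = f4_one \<and> \<not> C4t a b c"
    then have "(b = f4_zeta \<and> c = f4_zeta) \<or> (b = f4_zeta \<and> c = f4_zeta2) \<or> (b = f4_zeta2 \<and> c = f4_zeta) \<or> (b = f4_zeta2 \<and> c = f4_zeta2)"
      using odd_cases by blast
    then show P using h assms(6-9) by blast
  qed
qed

lemma C_mul: "odd f \<Longrightarrow> x \<in> Cgrp \<Longrightarrow> y \<in> Cgrp \<Longrightarrow> sd_mul f x y \<in> Cgrp"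
proof -
  assume f: "odd f" and x: "x \<in> Cgrp" and y: "y \<in> Cgrp"
  obtain a b c m where xe: "x = (gmat a b c, m)" and cx: "Ct m a b c" using C_E[OF x] by blast
  obtain a' b' c' n where ye: "y = (gmat a' b' c', n)" and cy: "Ct n a' b' c'" using C_E[OF y] by blast
  show ?thesis unfolding xe ye sd_mul_gmat Let_def C_gm frobq_odd[OF f]
    using cx cy
    by (elim Ct_cases) (simp_all add: Ct_def C4t_def Qt_def f4_pow2 f4_pow3 f4_frob_eq f4c)
qed

lemma C_inv: "odd f \<Longrightarrow> x \<in> Cgrp \<Longrightarrow> qinv f x \<in> Cgrp"
proof -
  assume f: "odd f" and x: "x \<in> Cgrp"
  obtain a b c m where xe: "x = (gmat a b c, m)" and cx: "Ct m a b c" using C_E[OF x] by blast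
  show ?thesis unfolding xe qinv_gm frob_gmat C_gm frobq_odd[OF f]
    using cx
    by (elim Ct_cases) (simp_all add: Ct_def C4t_def Qt_def invA_def invC_def f4_pow2 f4_pow3 f4_frob_eq f4c)
qed


definition C6t :: "f4 \<Rightarrow> f4 \<Rightarrow> f4 \<Rightarrow> bool" where
  "C6t a b c \<longleftrightarrow> a \<noteq> f4_zero \<and> b = f4_zero \<and> (c = f4_zero \<or> c = a)"

lemma C6_gm: "gmat a b c \<in> C6 \<longleftrightarrow> C6t a b c"
proof
  assume "gmat a b c \<in> C6"
  then obtain z d where "gmat a b c = mat_mul z d" "z \<in> Zgrp" "d \<in> C3" unfolding C6_def by blast
  then show "C6t a b c" unfolding Zgrp_def C3_def C6t_def
    by (auto simp: gmat_mul gmat_eq f4_pow2)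
next
  assume h: "C6t a b c"
  have z1: "gmat f4_one f4_zero f4_zero \<in> Zgrp" "gmat f4_one f4_zero f4_one \<in> Zgrp" unfolding Zgrp_def by auto
  have d: "gmat a f4_zero f4_zero \<in> C3" using h unfolding C3_def C6t_def by auto
  have "gmat a b c = mat_mul (gmat f4_one f4_zero f4_zero) (gmat a f4_zero f4_zero) \<or>
        gmat a b c = mat_mul (gmat f4_one f4_zero f4_one) (gmat a f4_zero f4_zero)"
    using h unfolding C6t_def by (auto simp: gmat_mul gmat_eq f4_pow2)
  then show "gmat a b c \<in> C6" unfolding C6_def using z1 d by blast
qed

lemma C6Z_gm: "(gmat a b c, n) \<in> C6Z \<longleftrightarrow> C6t a b c"
  unfolding C6Z_def by (simp add: C6_gm)

lemma C6Z_E: "x \<in> C6Z \<Longrightarrow> \<exists>a b c n. x = (gmat a b c, n) \<and> C6t a b c"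
proof -
  assume x: "x \<in> C6Z"
  obtain M n where xe: "x = (M, n)" by (cases x)
  have "M \<in> C6" using x unfolding xe C6Z_def by auto
  then obtain z d where "M = mat_mul z d" "z \<in> Zgrp" "d \<in> C3" unfolding C6_def by blast
  then have "\<exists>a b c. M = gmat a b c" unfolding Zgrp_def C3_def by (auto simp: gmat_mul; blast)
  then obtain a b c where "M = gmat a b c" by blast
  then show ?thesis using x xe C6Z_gm by blast
qed

lemma C6t_cases:
  assumes "C6t a b c"
  "a = f4_one \<Longrightarrow> b = f4_zero \<Longrightarrow> c = f4_zero \<Longrightarrow> P"
  "a = f4_zeta \<Longrightarrow> b = f4_zero \<Longrightarrow> c = f4_zero \<Longrightarrow> P"
  "a = f4_zeta2 \<Longrightarrow> b = f4_zero \<Longrightarrow> c = f4_zero \<Longrightarrow> P"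
  "a = f4_one \<Longrightarrow> b = f4_zero \<Longrightarrow> c = f4_one \<Longrightarrow> P"
  "a = f4_zeta \<Longrightarrow> b = f4_zero \<Longrightarrow> c = f4_zeta \<Longrightarrow> P"
  "a = f4_zeta2 \<Longrightarrow> b = f4_zero \<Longrightarrow> c = f4_zeta2 \<Longrightarrow> P"
  shows P
  using assms f4_exhaust[of a] unfolding C6t_def by blast

lemma C6t_Qt: "C6t a b c \<Longrightarrow> Qt a b c"
  by (erule C6t_cases) (simp_all add: Qt_def f4_pow2 f4_pow3 f4c)

lemma C6_QZ: "x \<in> C6Z \<Longrightarrow> x \<in> QZ"
  using C6Z_E C6t_Qt QZ_gm by blast

lemma C6t_mul: "C6t a b c \<Longrightarrow> C6t a' b' c' \<Longrightarrow> C6t (f4_mul a a') (f4_add (f4_mul a b') (f4_mul b (f4_pow a' 2)))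
       (f4_add (f4_mul a c') (f4_add (f4_mul b (f4_pow b' 2)) (f4_mul c a')))"
  apply (erule C6t_cases; erule C6t_cases)
  apply (simp_all add: C6t_def f4_pow2 f4c)
  done

lemma C6t_frobq: "C6t a b c \<Longrightarrow> C6t (frobq f n a) (frobq f n b) (frobq f n c)"
  unfolding frobq_eq by (erule C6t_cases) (simp_all add: C6t_def f4_frob_eq f4c)

lemma C6t_inv: "C6t a b c \<Longrightarrow> C6t (invA a) b (invC a b c)"
  by (erule C6t_cases) (simp_all add: C6t_def invA_def invC_def f4_pow2 f4_pow3 f4c)

lemma C6_mul: "x \<in> C6Z \<Longrightarrow> y \<in> C6Z \<Longrightarrow> sd_mul f x y \<in> C6Z"
proof -
  assume x: "x \<in> C6Z" and y: "y \<in> C6Z"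
  obtain a b c m where xe: "x = (gmat a b c, m)" and cx: "C6t a b c" using C6Z_E[OF x] by blast
  obtain a' b' c' n where ye: "y = (gmat a' b' c', n)" and cy: "C6t a' b' c'" using C6Z_E[OF y] by blast
  show ?thesis unfolding xe ye sd_mul_gmat Let_def C6Z_gm
    by (rule C6t_mul[OF cx C6t_frobq[OF cy]])
qed

lemma C6_inv: "x \<in> C6Z \<Longrightarrow> qinv f x \<in> C6Z"
proof -
  assume x: "x \<in> C6Z"
  obtain a b c m where xe: "x = (gmat a b c, m)" and cx: "C6t a b c" using C6Z_E[OF x] by blast
  show ?thesis unfolding xe qinv_gm frob_gmat C6Z_gm
    by (rule C6t_frobq[OF C6t_inv[OF cx]])
qed

lemma Q8Z_gm: "(gmat a b c, n) \<in> Q8Z \<longleftrightarrow> Qt a b c \<and> a = f4_one"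
  unfolding Q8Z_def by (simp add: Q8_gm)

lemma Q8Z_QZ: "x \<in> Q8Z \<Longrightarrow> x \<in> QZ"
  unfolding Q8Z_def QZ_def Q8_def by auto

lemma Q8Z_mul: "x \<in> Q8Z \<Longrightarrow> y \<in> Q8Z \<Longrightarrow> sd_mul f x y \<in> Q8Z"
proof -
  assume x: "x \<in> Q8Z" and y: "y \<in> Q8Z"
  obtain a b c m where xe: "x = (gmat a b c, m)" and qx: "Qt a b c" using QZ_E[OF Q8Z_QZ[OF x]] by blast
  obtain a' b' c' n where ye: "y = (gmat a' b' c', n)" and qy: "Qt a' b' c'" using QZ_E[OF Q8Z_QZ[OF y]] by blast
  have a: "a = f4_one" "a' = f4_one" using x y xe ye Q8Z_gm by auto
  show ?thesis unfolding xe ye sd_mul_gmat Let_def Q8Z_gm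
    using Qt_mul[OF qx Qt_frobq[OF qy]] a by simp
qed

lemma C_Q8Z: "x \<in> Cgrp \<Longrightarrow> x \<in> Q8Z"
  unfolding Cgrp_def Q8Z_def Q8_def C4_list by (auto simp: gmat_Qgrp Qt_def f4_pow2 f4_pow3 f4c)

lemma sub_cancel:
  assumes sub: "\<And>x. x \<in> H \<Longrightarrow> x \<in> QZ"
    and mul: "\<And>x y. x \<in> H \<Longrightarrow> y \<in> H \<Longrightarrow> sd_mul f x y \<in> H"
    and inv: "\<And>x. x \<in> H \<Longrightarrow> qinv f x \<in> H"
    and h: "h \<in> H" and x: "x \<in> QZ"
  shows "sd_mul f h x \<in> H \<longleftrightarrow> x \<in> H"
proof
  assume hx: "sd_mul f h x \<in> H"
  have "x = sd_mul f (qinv f h) (sd_mul f h x)"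
    by (simp add: sd_mul_assoc[symmetric] qinv_l[OF sub[OF h]] e1_left_QZ[OF x])
  then show "x \<in> H" using mul[OF inv[OF h] hx] by simp
qed (rule mul[OF h])

lemma e1_C: "e1 \<in> Cgrp" unfolding e1_def C_gm Ct_def C4t_def by simp
lemma e1_C6: "e1 \<in> C6Z" unfolding e1_def C6Z_gm C6t_def by (simp add: f4c)
lemma e1_Q8: "e1 \<in> Q8Z" unfolding e1_def Q8Z_gm using e1_QZ unfolding e1_def QZ_gm by simp


definition rr :: "nat \<Rightarrow> mat3 \<times> int" where
  "rr j = (if j = 0 then (gmat f4_one f4_zero f4_zero, 0)
      else if j = 1 then (gmat f4_one f4_zeta f4_zeta, 0)
      else if j = 2 then (gmat f4_zeta f4_zero f4_zero, 0)
      else if j = 3 then (gmat f4_zeta f4_one f4_zeta2, 0)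
      else if j = 4 then (gmat f4_zeta2 f4_zero f4_zero, 0)
      else (gmat f4_zeta2 f4_zeta2 f4_one, 0))"

definition ri :: "nat \<Rightarrow> mat3 \<times> int" where
  "ri j = (if j = 0 then (gmat f4_one f4_zero f4_zero, 0)
      else if j = 1 then (gmat f4_one f4_zeta f4_zeta2, 0)
      else if j = 2 then (gmat f4_zeta2 f4_zero f4_zero, 0)
      else if j = 3 then (gmat f4_zeta2 f4_one f4_zeta, 0)
      else if j = 4 then (gmat f4_zeta f4_zero f4_zero, 0)
      else (gmat f4_zeta f4_zeta2 f4_one, 0))"

definition ss :: "nat \<Rightarrow> mat3 \<times> int" where
  "ss k = (if k = 0 then (gmat f4_one f4_zero f4_zero, 0)
      else if k = 1 then (gmat f4_one f4_one f4_zeta, 0)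
      else if k = 2 then (gmat f4_one f4_zeta f4_zeta, 0)
      else (gmat f4_one f4_zeta2 f4_zeta, 0))"

definition si :: "nat \<Rightarrow> mat3 \<times> int" where
  "si k = (if k = 0 then (gmat f4_one f4_zero f4_zero, 0)
      else if k = 1 then (gmat f4_one f4_one f4_zeta2, 0)
      else if k = 2 then (gmat f4_one f4_zeta f4_zeta2, 0)
      else (gmat f4_one f4_zeta2 f4_zeta2, 0))"

lemma sum6: "(\<Sum>j<(6::nat). g j) = g 0 + g 1 + g 2 + g 3 + g 4 + (g 5 :: 'a :: comm_monoid_add)"
  by (simp add: eval_nat_numeral ac_simps)

lemma sum4: "(\<Sum>j<(4::nat). g j) = g 0 + g 1 + g 2 + (g 3 :: 'a :: comm_monoid_add)"
  by (simp add: eval_nat_numeral ac_simps)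

lemma less6: "j < (6::nat) \<longleftrightarrow> j = 0 \<or> j = 1 \<or> j = 2 \<or> j = 3 \<or> j = 4 \<or> j = 5"
  by auto

lemma less4: "j < (4::nat) \<longleftrightarrow> j = 0 \<or> j = 1 \<or> j = 2 \<or> j = 3"
  by auto

lemma rr_QZ: "j < 6 \<Longrightarrow> rr j \<in> QZ"
  unfolding less6 by (elim disjE) (simp_all add: rr_def QZ_gm Qt_def f4_pow2 f4_pow3 f4c)
lemma ri_QZ: "j < 6 \<Longrightarrow> ri j \<in> QZ"
  unfolding less6 by (elim disjE) (simp_all add: ri_def QZ_gm Qt_def f4_pow2 f4_pow3 f4c)
lemma si_QZ: "k < 4 \<Longrightarrow> si k \<in> QZ"
  unfolding less4 by (elim disjE) (simp_all add: si_def QZ_gm Qt_def f4_pow2 f4_pow3 f4c)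
lemma ss_QZ: "k < 4 \<Longrightarrow> ss k \<in> QZ"
  unfolding less4 by (elim disjE) (simp_all add: ss_def QZ_gm Qt_def f4_pow2 f4_pow3 f4c)

lemma ri_rr: "j < 6 \<Longrightarrow> sd_mul f (ri j) (rr j) = e1"
  unfolding less6 by (elim disjE) (simp_all add: rr_def ri_def e1_def sd_mul_gmat frob_gmat gmat_mul frobq_eq f4_pow2 f4c)
lemma rr_ri: "j < 6 \<Longrightarrow> sd_mul f (rr j) (ri j) = e1"
  unfolding less6 by (elim disjE) (simp_all add: rr_def ri_def e1_def sd_mul_gmat frob_gmat gmat_mul frobq_eq f4_pow2 f4c)
lemma si_ss: "k < 4 \<Longrightarrow> sd_mul f (si k) (ss k) = e1"
  unfolding less4 by (elim disjE) (simp_all add: ss_def si_def e1_def sd_mul_gmat frob_gmat gmat_mul frobq_eq f4_pow2 f4c)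

lemma D4: "odd f \<Longrightarrow> x \<in> QZ \<Longrightarrow> (\<Sum>j<6. if sd_mul f x (ri j) \<in> Cgrp then 1 else 0) = (1::nat)"
proof -
  assume f: "odd f" and x: "x \<in> QZ"
  obtain a b c n where xe: "x = (gmat a b c, n)" and q: "Qt a b c" using QZ_E[OF x] by blast
  show ?thesis unfolding xe sum6
    by (rule Qt_cases[OF q]; cases "odd n")
      (simp_all add: ri_def sd_mul_gmat frob_gmat gmat_mul frobq_odd[OF f] C_gm Ct_def C4t_def Qt_def f4_pow2 f4_pow3 f4_frob_eq f4c)
qed


definition cl :: "nat \<Rightarrow> mat3 \<times> int" where
  "cl i = (if i = 0 then (gmat f4_one f4_zero f4_zero, 0)
      else if i = 1 then (gmat f4_one f4_zeta f4_zeta, 1)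
      else if i = 2 then (gmat f4_one f4_one f4_zeta, 0)
      else if i = 3 then (gmat f4_one f4_zeta2 f4_zeta2, 1)
      else if i = 4 then (gmat f4_one f4_zero f4_one, 0)
      else if i = 5 then (gmat f4_one f4_zeta f4_zeta2, 1)
      else if i = 6 then (gmat f4_one f4_one f4_zeta2, 0)
      else (gmat f4_one f4_zeta2 f4_zeta, 1))"

definition ha :: "nat \<Rightarrow> f4" where
  "ha j = (if j < 2 then f4_one else if j < 4 then f4_zeta2 else f4_zeta)"

definition Et :: "nat \<Rightarrow> nat \<Rightarrow> nat" where
  "Et k j = (if k = 0 then (if j = 0 then 0 else if j = 1 then 7 else if j = 2 then 0 else if j = 3 then 7 else if j = 4 then 0 else 7) else if k = 1 then (if j = 0 then 2 else if j = 1 then 5 else if j = 2 then 5 else if j = 3 then 6 else if j = 4 then 3 else 0) else if k = 2 then (if j = 0 then 3 else if j = 1 then 0 else if j = 2 then 2 else if j = 3 then 5 else if j = 4 then 5 else 6) else (if j = 0 then 5 else if j = 1 then 6 else if j = 2 then 3 else if j = 3 then 0 else if j = 4 then 2 else 5))"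

lemma less8: "j < (8::nat) \<longleftrightarrow> j = 0 \<or> j = 1 \<or> j = 2 \<or> j = 3 \<or> j = 4 \<or> j = 5 \<or> j = 6 \<or> j = 7"
  by auto

lemma chain: "odd f \<Longrightarrow> k < 4 \<Longrightarrow> j < 6 \<Longrightarrow>
  sd_mul f (ss k) (ri j) = sd_mul f (gmat (ha j) f4_zero f4_zero, - int (Et k j mod 2)) (cl (Et k j))"
  unfolding less4 less6
  by (elim disjE) (simp_all add: ss_def ri_def cl_def ha_def Et_def sd_mul_gmat frob_gmat gmat_mul frobq_eq f4_pow2 f4_frob_eq f4c)

lemma Et_lt: "k < 4 \<Longrightarrow> j < 6 \<Longrightarrow> Et k j < 8"
  unfolding less4 less6 by (elim disjE) (simp_all add: Et_def)

lemma cl_C: "i < 8 \<Longrightarrow> cl i \<in> Cgrp"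
  unfolding less8 by (elim disjE) (simp_all add: cl_def C_gm Ct_def C4t_def Qt_def f4_pow2 f4_pow3 f4c)

lemma cl_prod:
  "sd_mul f (cl 2) (cl 2) = cl 4" "sd_mul f (cl 4) (cl 2) = cl 6"
  "sd_mul f (cl 2) (cl 1) = cl 3" "sd_mul f (cl 4) (cl 1) = cl 5" "sd_mul f (cl 6) (cl 1) = cl 7"
  by (simp_all add: cl_def sd_mul_gmat frob_gmat gmat_mul frobq_eq f4_pow2 f4c)

lemma cl0: "cl 0 = e1" by (simp add: cl_def e1_def)

lemma cl_sq: "odd f \<Longrightarrow> sd_mul f (cl 1) (cl 1) = sd_mul f (cl 2) (gmat f4_one f4_zero f4_zero, 2)"
  by (simp add: cl_def sd_mul_gmat frob_gmat gmat_mul frobq_eq f4_pow2 f4_frob_eq f4c)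

lemma D5: "odd f \<Longrightarrow> x \<in> QZ \<Longrightarrow> \<exists>k<4. sd_mul f x (si k) \<in> C6Z"
proof -
  assume f: "odd f" and x: "x \<in> QZ"
  obtain a b c n where xe: "x = (gmat a b c, n)" and q: "Qt a b c" using QZ_E[OF x] by blast
  have "sd_mul f x (si 0) \<in> C6Z \<or> sd_mul f x (si 1) \<in> C6Z \<or> sd_mul f x (si 2) \<in> C6Z \<or> sd_mul f x (si 3) \<in> C6Z"
    unfolding xe
    by (rule Qt_cases[OF q]; cases "odd n")
      (simp_all add: si_def sd_mul_gmat frob_gmat gmat_mul frobq_odd[OF f] C6Z_gm C6t_def f4_pow2 f4_pow3 f4_frob_eq f4c)
  then show ?thesis by (elim disjE) (rule exI, rule conjI[rotated], assumption, simp)+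
qed

lemma D8: "odd f \<Longrightarrow> x \<in> Q8Z \<Longrightarrow> x \<in> Cgrp \<or> sd_mul f x (ri 1) \<in> Cgrp"
proof -
  assume f: "odd f" and x: "x \<in> Q8Z"
  obtain a b c n where xe: "x = (gmat a b c, n)" and q: "Qt a b c" using QZ_E[OF Q8Z_QZ[OF x]] by blast
  have a: "a = f4_one" using x xe Q8Z_gm by auto
  have "a = f4_one \<longrightarrow> (gmat a b c, n) \<in> Cgrp \<or> sd_mul f (gmat a b c, n) (ri 1) \<in> Cgrp"
    by (rule Qt_cases[OF q]; cases "odd n")
      (simp_all add: ri_def sd_mul_gmat frob_gmat gmat_mul frobq_odd[OF f] C_gm Ct_def C4t_def Qt_def f4_pow2 f4_pow3 f4_frob_eq f4c)
  then show ?thesis using a xe by simp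
qed


lemma LA_a:
  fixes D :: complex and v :: "nat \<Rightarrow> complex"
  assumes D4: "D^4 = -1" and h: "\<forall>k<4. (\<Sum>j<6. v j * D^(Et k j)) = 0" and v0: "v 0 = 0" and v1: "v 1 = 0"
  shows "\<forall>j<6. v j = 0"
proof -
  have "(\<Sum>j<6. v j * D^(Et 0 j)) = 0" using h by simp
  then have e0: "1 * v 2 + 1 * v 4 + 1 * D^7 * v 3 + 1 * D^7 * v 5 = 0" using v0 v1 by (simp add: sum6 Et_def algebra_simps)
  have "(\<Sum>j<6. v j * D^(Et 1 j)) = 0" using h by simp
  then have e1: "1 * v 5 + 1 * D^3 * v 4 + 1 * D^5 * v 2 + 1 * D^6 * v 3 = 0" using v0 v1 by (simp add: sum6 Et_def algebra_simps)
  have "(\<Sum>j<6. v j * D^(Et 2 j)) = 0" using h by simp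
  then have e2: "1 * D^2 * v 2 + 1 * D^5 * v 3 + 1 * D^5 * v 4 + 1 * D^6 * v 5 = 0" using v0 v1 by (simp add: sum6 Et_def algebra_simps)
  have "(\<Sum>j<6. v j * D^(Et 3 j)) = 0" using h by simp
  then have e3: "1 * v 3 + 1 * D^2 * v 4 + 1 * D^3 * v 2 + 1 * D^5 * v 5 = 0" using v0 v1 by (simp add: sum6 Et_def algebra_simps)
  have "(3 + 1 * D^1 + 1 * D^2 - 1 * D^3) * (1 * v 2 + 1 * v 4 + 1 * D^7 * v 3 + 1 * D^7 * v 5) + (1 + 1 * D^1 - 1 * D^2 + 3 * D^3) * (1 * v 5 + 1 * D^3 * v 4 + 1 * D^5 * v 2 + 1 * D^6 * v 3) + (1 - 1 * D^1 - 3 * D^2 - 1 * D^3) * (1 * D^2 * v 2 + 1 * D^5 * v 3 + 1 * D^5 * v 4 + 1 * D^6 * v 5) + (1 - 3 * D^1 + 1 * D^2 + 1 * D^3) * (1 * v 3 + 1 * D^2 * v 4 + 1 * D^3 * v 2 + 1 * D^5 * v 5) - 12 * v 2 = (D^4 + 1) * (- 9 * v 2 + 1 * v 3 + 3 * v 4 + 1 * v 5 + 1 * D^1 * v 2 - 3 * D^1 * v 3 + 1 * D^1 * v 4 + 1 * D^1 * v 5 + 2 * D^2 * v 2 + 1 * D^2 * v 3 + 2 * D^2 * v 4 - 1 * D^2 * v 5 - 1 * D^3 * v 2 + 1 * D^3 * v 3 - 3 * D^3 * v 4 + 3 * D^3 * v 5 + 3 * D^4 * v 2 - 1 * D^4 *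 v 3 - 1 * D^4 * v 4 - 1 * D^4 * v 5 + 4 * D^5 * v 3 - 1 * D^6 * v 3 - 1 * D^6 * v 5)" by algebra
  then have r2: "v 2 = 0" using D4 e0 e1 e2 e3 by simp
  have "(- 1 + 3 * D^1 - 1 * D^2 - 1 * D^3) * (1 * v 2 + 1 * v 4 + 1 * D^7 * v 3 + 1 * D^7 * v 5) + (- 1 + 1 * D^1 + 3 * D^2 + 1 * D^3) * (1 * v 5 + 1 * D^3 * v 4 + 1 * D^5 * v 2 + 1 * D^6 * v 3) + (1 + 1 * D^1 - 1 * D^2 + 3 * D^3) * (1 * D^2 * v 2 + 1 * D^5 * v 3 + 1 * D^5 * v 4 + 1 * D^6 * v 5) + (3 + 1 * D^1 + 1 * D^2 - 1 * D^3) * (1 * v 3 + 1 * D^2 * v 4 + 1 * D^3 * v 2 + 1 * D^5 * v 5) - 12 * v 3 = (D^4 + 1) * (- 1 * v 2 - 9 * v 3 - 1 * v 4 - 1 * v 5 + 3 * D^1 * v 2 + 1 * D^1 * v 3 + 3 * D^1 * v 4 + 1 * D^1 * v 5 + 1 * D^2 * v 3 + 2 * D^2 * v 4 + 3 * D^2 * v 5 + 3 * D^3 * v 2 - 1 * D^3 * v 3 - 1 * D^3 * v 4 + 1 * D^3 * v 5 + 1 * D^4 * v 2 + 9 * D^4 * v 3 + 3 * D^4 * v 4 + 1 * D^4 * v 5 + 2 * D^5 * v 5 - 1 * D^6 * v 3 - 1 * D^6 * v 5)" by algebra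
  then have r3: "v 3 = 0" using D4 e0 e1 e2 e3 by simp
  have "(3 - 1 * D^1 - 1 * D^2 + 1 * D^3) * (1 * v 2 + 1 * v 4 + 1 * D^7 * v 3 + 1 * D^7 * v 5) + (- 1 - 3 * D^1 - 1 * D^2 - 1 * D^3) * (1 * v 5 + 1 * D^3 * v 4 + 1 * D^5 * v 2 + 1 * D^6 * v 3) + (- 1 - 1 * D^1 + 1 * D^2 + 3 * D^3) * (1 * D^2 * v 2 + 1 * D^5 * v 3 + 1 * D^5 * v 4 + 1 * D^6 * v 5) + (- 1 + 1 * D^1 - 3 * D^2 + 1 * D^3) * (1 * v 3 + 1 * D^2 * v 4 + 1 * D^3 * v 2 + 1 * D^5 * v 5) - 12 * v 4 = (D^4 + 1) * (3 * v 2 - 1 * v 3 - 9 * v 4 - 1 * v 5 - 1 * D^1 * v 2 + 1 * D^1 * v 3 - 1 * D^1 * v 4 - 3 * D^1 * v 5 - 2 * D^2 * v 2 - 3 * D^2 * v 3 - 2 * D^2 * v 4 - 1 * D^2 * v 5 - 1 * D^3 * v 2 + 1 * D^3 * v 3 + 1 * D^3 * v 4 - 1 * D^3 * v 5 - 1 * D^4 * v 2 + 1 * D^4 * v 3 + 3 * D^4 * v 4 + 1 * D^4 * v 5 - 2 * D^5 * v 3 + 2 * D^5 * v 5 + 1 * D^6 * v 3 + 1 * D^6 * v 5)" by algebra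
  then have r4: "v 4 = 0" using D4 e0 e1 e2 e3 by simp
  have "(1 + 3 * D^1 + 1 * D^2 + 1 * D^3) * (1 * v 2 + 1 * v 4 + 1 * D^7 * v 3 + 1 * D^7 * v 5) + (3 - 1 * D^1 - 1 * D^2 + 1 * D^3) * (1 * v 5 + 1 * D^3 * v 4 + 1 * D^5 * v 2 + 1 * D^6 * v 3) + (1 - 1 * D^1 + 3 * D^2 - 1 * D^3) * (1 * D^2 * v 2 + 1 * D^5 * v 3 + 1 * D^5 * v 4 + 1 * D^6 * v 5) + (- 1 - 1 * D^1 + 1 * D^2 + 3 * D^3) * (1 * v 3 + 1 * D^2 * v 4 + 1 * D^3 * v 2 + 1 * D^5 * v 5) - 12 * v 5 = (D^4 + 1) * (1 * v 2 - 1 * v 3 + 1 * v 4 - 9 * v 5 + 3 * D^1 * v 2 - 1 * D^1 * v 3 + 3 * D^1 * v 4 - 1 * D^1 * v 5 + 2 * D^2 * v 2 + 1 * D^2 * v 3 - 1 * D^2 * v 5 - 1 * D^3 * v 2 + 3 * D^3 * v 3 + 3 * D^3 * v 4 + 1 * D^3 * v 5 + 1 * D^4 * v 2 + 1 * D^4 * v 3 - 1 * D^4 * v 4 + 9 * D^4 * v 5 + 2 * D^5 * v 3 + 1 * D^6 * v 3 + 1 * D^6 * v 5)" by algebra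
  then have r5: "v 5 = 0" using D4 e0 e1 e2 e3 by simp
  show ?thesis using v0 v1 r2 r3 r4 r5 unfolding less6 by auto
qed

definition kw :: "complex \<Rightarrow> complex \<Rightarrow> complex \<Rightarrow> nat \<Rightarrow> complex" where
  "kw D x0 x1 j = (if j = 0 then (2 * x0) else if j = 1 then (2 * x1) else if j = 2 then (- 1 * x0 - 1 * x1 - 1 * D^2 * x0 + 1 * D^2 * x1) else if j = 3 then (1 * x0 - 1 * x1 + 1 * D^2 * x0 + 1 * D^2 * x1) else if j = 4 then (- 1 * x0 + 1 * x1 + 1 * D^2 * x0 - 1 * D^2 * x1) else (- 1 * x0 - 1 * x1 - 1 * D^2 * x0 - 1 * D^2 * x1))"

lemma LA_b:
  fixes D x0 x1 :: complex
  assumes D4: "D^4 = -1" and k: "k < 4"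
  shows "(\<Sum>j<6. kw D x0 x1 j * D^(Et k j)) = 0"
proof -
  have "(\<Sum>j<6. kw D x0 x1 j * D^(Et 0 j)) = (2 * x0) * D^0 + (2 * x1) * D^7 + (- 1 * x0 - 1 * x1 - 1 * D^2 * x0 + 1 * D^2 * x1) * D^0 + (1 * x0 - 1 * x1 + 1 * D^2 * x0 + 1 * D^2 * x1) * D^7 + (- 1 * x0 + 1 * x1 + 1 * D^2 * x0 - 1 * D^2 * x1) * D^0 + (- 1 * x0 - 1 * x1 - 1 * D^2 * x0 - 1 * D^2 * x1) * D^7" by (simp add: sum6 Et_def kw_def)
  also have "\<dots> = (D^4 + 1) * (0)" by algebra
  finally have s0: "(\<Sum>j<6. kw D x0 x1 j * D^(Et 0 j)) = 0" using D4 by simp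
  have "(\<Sum>j<6. kw D x0 x1 j * D^(Et 1 j)) = (2 * x0) * D^2 + (2 * x1) * D^5 + (- 1 * x0 - 1 * x1 - 1 * D^2 * x0 + 1 * D^2 * x1) * D^5 + (1 * x0 - 1 * x1 + 1 * D^2 * x0 + 1 * D^2 * x1) * D^6 + (- 1 * x0 + 1 * x1 + 1 * D^2 * x0 - 1 * D^2 * x1) * D^3 + (- 1 * x0 - 1 * x1 - 1 * D^2 * x0 - 1 * D^2 * x1) * D^0" by (simp add: sum6 Et_def kw_def)
  also have "\<dots> = (D^4 + 1) * (- 1 * x0 - 1 * x1 + 1 * D^2 * x0 - 1 * D^2 * x1 - 1 * D^3 * x0 + 1 * D^3 * x1 + 1 * D^4 * x0 + 1 * D^4 * x1)" by algebra
  finally have s1: "(\<Sum>j<6. kw D x0 x1 j * D^(Et 1 j)) = 0" using D4 by simp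
  have "(\<Sum>j<6. kw D x0 x1 j * D^(Et 2 j)) = (2 * x0) * D^3 + (2 * x1) * D^0 + (- 1 * x0 - 1 * x1 - 1 * D^2 * x0 + 1 * D^2 * x1) * D^2 + (1 * x0 - 1 * x1 + 1 * D^2 * x0 + 1 * D^2 * x1) * D^5 + (- 1 * x0 + 1 * x1 + 1 * D^2 * x0 - 1 * D^2 * x1) * D^5 + (- 1 * x0 - 1 * x1 - 1 * D^2 * x0 - 1 * D^2 * x1) * D^6" by (simp add: sum6 Et_def kw_def)
  also have "\<dots> = (D^4 + 1) * (2 * x1 - 1 * D^2 * x0 - 1 * D^2 * x1 + 2 * D^3 * x0 - 1 * D^4 * x0 - 1 * D^4 * x1)" by algebra
  finally have s2: "(\<Sum>j<6. kw D x0 x1 j * D^(Et 2 j)) = 0" using D4 by simp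
  have "(\<Sum>j<6. kw D x0 x1 j * D^(Et 3 j)) = (2 * x0) * D^5 + (2 * x1) * D^6 + (- 1 * x0 - 1 * x1 - 1 * D^2 * x0 + 1 * D^2 * x1) * D^3 + (1 * x0 - 1 * x1 + 1 * D^2 * x0 + 1 * D^2 * x1) * D^0 + (- 1 * x0 + 1 * x1 + 1 * D^2 * x0 - 1 * D^2 * x1) * D^2 + (- 1 * x0 - 1 * x1 - 1 * D^2 * x0 - 1 * D^2 * x1) * D^5" by (simp add: sum6 Et_def kw_def)
  also have "\<dots> = (D^4 + 1) * (1 * x0 - 1 * x1 + 2 * D^2 * x1 - 1 * D^3 * x0 - 1 * D^3 * x1)" by algebra
  finally have s3: "(\<Sum>j<6. kw D x0 x1 j * D^(Et 3 j)) = 0" using D4 by simp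
  show ?thesis using k s0 s1 s2 s3 unfolding less4 by auto
qed


lemma Ind_zero: "(\<lambda>x. 0) \<in> Ind f H \<chi> X" unfolding Ind_def by simp
lemma Ind_add: "F1 \<in> Ind f H \<chi> X \<Longrightarrow> F2 \<in> Ind f H \<chi> X \<Longrightarrow> (\<lambda>x. F1 x + F2 x) \<in> Ind f H \<chi> X"
  unfolding Ind_def by (simp add: distrib_left)
lemma Ind_smult: "F \<in> Ind f H \<chi> X \<Longrightarrow> (\<lambda>x. c * F x) \<in> Ind f H \<chi> X"
  unfolding Ind_def by (simp add: mult.left_commute)
lemma Ind_eq: "F \<in> Ind f H \<chi> X \<Longrightarrow> h \<in> H \<Longrightarrow> x \<in> X \<Longrightarrow> F (sd_mul f h x) = \<chi> h * F x"
  unfolding Ind_def by blast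
lemma Ind_out: "F \<in> Ind f H \<chi> X \<Longrightarrow> x \<notin> X \<Longrightarrow> F x = 0"
  unfolding Ind_def by blast
lemma Ind_sum: "(\<And>j. j < (m::nat) \<Longrightarrow> Fs j \<in> Ind f H \<chi> X) \<Longrightarrow> (\<lambda>x. \<Sum>j<m. a j * Fs j x) \<in> Ind f H \<chi> X"
proof (induction m)
  case 0 then show ?case using Ind_zero by simp
next
  case (Suc m)
  have "(\<lambda>x. \<Sum>j<m. a j * Fs j x) \<in> Ind f H \<chi> X" using Suc by simp
  moreover have "(\<lambda>x. a m * Fs m x) \<in> Ind f H \<chi> X" using Suc by (simp add: Ind_smult)
  ultimately show ?case using Ind_add by (simp add: lessThan_Suc)
qed

lemma ract_Ind:
  assumes F: "F \<in> Ind f H \<chi> QZ" and g: "g \<in> QZ" and sub: "\<And>h. h \<in> H \<Longrightarrow> h \<in> QZ"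
  shows "ract f QZ g F \<in> Ind f H \<chi> QZ"
  unfolding Ind_def mem_Collect_eq
proof (intro conjI allI impI ballI)
  fix x assume "x \<notin> QZ" then show "ract f QZ g F x = 0" unfolding ract_def by simp
next
  fix h x assume h: "h \<in> H" and x: "x \<in> QZ"
  have hx: "sd_mul f h x \<in> QZ" using QZ_mul[OF sub[OF h] x] .
  have xg: "sd_mul f x g \<in> QZ" using QZ_mul[OF x g] .
  show "ract f QZ g F (sd_mul f h x) = \<chi> h * ract f QZ g F x"
    unfolding ract_def using hx x Ind_eq[OF F h xg] by (simp add: sd_mul_assoc)
qed

lemma sub_cancel_r:
  assumes sub: "\<And>x. x \<in> H \<Longrightarrow> x \<in> QZ"
    and mul: "\<And>x y. x \<in> H \<Longrightarrow> y \<in> H \<Longrightarrow> sd_mul f x y \<in> H"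
    and inv: "\<And>x. x \<in> H \<Longrightarrow> qinv f x \<in> H"
    and h: "c \<in> H" and x: "x \<in> QZ"
  shows "sd_mul f x c \<in> H \<longleftrightarrow> x \<in> H"
proof
  assume hx: "sd_mul f x c \<in> H"
  have "x = sd_mul f (sd_mul f x c) (qinv f c)"
    by (simp add: sd_mul_assoc qinv_r[OF sub[OF h]] e1_right_QZ[OF x])
  then show "x \<in> H" using mul[OF hx inv[OF h]] by simp
qed (rule mul[OF _ h])

lemma ind_one:
  assumes "(\<Sum>j<(6::nat). if P j then 1 else 0) = (1::nat)"
  shows "\<exists>j0<6. P j0 \<and> (\<forall>j<6. P j \<longrightarrow> j = j0)"
proof -
  have "card {j \<in> {..<(6::nat)}. P j} = 1"
    using assms by (simp add: sum.inter_filter[symmetric])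
  then obtain j0 where "{j \<in> {..<(6::nat)}. P j} = {j0}" by (rule card_1_singletonE)
  then show ?thesis by (metis (mono_tags, lifting) insertI1 lessThan_iff mem_Collect_eq singletonD)
qed

locale L =
  fixes f :: nat and s \<eta> :: complex
    and \<phi> :: "mat3 \<Rightarrow> complex"
    and \<phi>1 \<phi>2 :: "mat3 \<times> int \<Rightarrow> complex"
    and \<Psi> :: "(mat3 \<times> int \<Rightarrow> complex) \<Rightarrow> (mat3 \<times> int \<Rightarrow> complex)"
  assumes f_odd: "odd f"
    and s_sqrt: "s ^ 2 = -2"
    and eta: "\<eta> ^ 2 + s ^ (f + 1) * \<eta> + of_nat (2 ^ f) = 0"
    and phi_char: "(\<forall>x\<in>C4. \<phi> x \<noteq> 0) \<and> (\<forall>x\<in>C4. \<forall>y\<in>C4. \<phi> (mat_mul x y) = \<phi> x * \<phi> y)"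
    and phi_faithful: "inj_on \<phi> C4"
    and phi1_char: "is_character f Cgrp \<phi>1"
    and phi1_a: "\<phi>1 (gmat f4_one f4_zeta f4_zeta, 1) = \<eta> / of_nat (2 ^ f)"
    and phi1_b: "\<phi>1 (gmat f4_one f4_zero f4_zero, 2) = - 1 / of_nat (2 ^ f)"
    and phi2_char: "is_character f C6Z \<phi>2"
    and phi2_C6: "\<forall>z\<in>Zgrp. \<forall>c\<in>C3. \<phi>2 (mat_mul z c, 0) = \<phi> z"
    and phi2_b: "\<phi>2 (gmat f4_one f4_zero f4_zero, 1) = s ^ f / of_nat (2 ^ f)"
    and Psi_hom: "rep_hom QZ (ract f QZ) (ract f QZ) (Ind f Cgrp \<phi>1 QZ) (Ind f C6Z \<phi>2 QZ) \<Psi>"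
    and Psi_surj: "\<Psi> ` Ind f Cgrp \<phi>1 QZ = Ind f C6Z \<phi>2 QZ"
begin

abbreviation "V \<equiv> Ind f Cgrp \<phi>1 QZ"
abbreviation "W \<equiv> Ind f C6Z \<phi>2 QZ"
abbreviation "V0 \<equiv> Ind f Cgrp \<phi>1 Q8Z"

lemma Psi_W: "F \<in> V \<Longrightarrow> \<Psi> F \<in> W" using Psi_hom unfolding rep_hom_def by blast
lemma Psi_add: "F1 \<in> V \<Longrightarrow> F2 \<in> V \<Longrightarrow> \<Psi> (\<lambda>x. F1 x + F2 x) = (\<lambda>y. \<Psi> F1 y + \<Psi> F2 y)"
  using Psi_hom unfolding rep_hom_def by blast
lemma Psi_smult: "F \<in> V \<Longrightarrow> \<Psi> (\<lambda>x. c * F x) = (\<lambda>y. c * \<Psi> F y)"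
  using Psi_hom unfolding rep_hom_def by blast
lemma Psi_equiv: "g \<in> QZ \<Longrightarrow> F \<in> V \<Longrightarrow> \<Psi> (ract f QZ g F) = ract f QZ g (\<Psi> F)"
  using Psi_hom unfolding rep_hom_def by blast

lemma phi1_mul: "x \<in> Cgrp \<Longrightarrow> y \<in> Cgrp \<Longrightarrow> \<phi>1 (sd_mul f x y) = \<phi>1 x * \<phi>1 y"
  using phi1_char unfolding is_character_def by blast
lemma phi1_nz: "x \<in> Cgrp \<Longrightarrow> \<phi>1 x \<noteq> 0"
  using phi1_char unfolding is_character_def by blast
lemma phi2_mul: "x \<in> C6Z \<Longrightarrow> y \<in> C6Z \<Longrightarrow> \<phi>2 (sd_mul f x y) = \<phi>2 x * \<phi>2 y"
  using phi2_char unfolding is_character_def by blast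
lemma phi2_nz: "x \<in> C6Z \<Longrightarrow> \<phi>2 x \<noteq> 0"
  using phi2_char unfolding is_character_def by blast

lemma idem1: "(z::complex) \<noteq> 0 \<Longrightarrow> z = z * z \<Longrightarrow> z = 1"
  by (metis mult_cancel_left2)

lemma phi1_e1: "\<phi>1 e1 = 1"
  using phi1_mul[OF e1_C e1_C] phi1_nz[OF e1_C] e1_left_QZ[OF e1_QZ] idem1 by metis
lemma phi2_e1: "\<phi>2 e1 = 1"
  using phi2_mul[OF e1_C6 e1_C6] phi2_nz[OF e1_C6] e1_left_QZ[OF e1_QZ] idem1 by metis

lemma C_sub: "x \<in> Cgrp \<Longrightarrow> x \<in> QZ" by (rule C_QZ)
lemma C_canc_l: "h \<in> Cgrp \<Longrightarrow> x \<in> QZ \<Longrightarrow> sd_mul f h x \<in> Cgrp \<longleftrightarrow> x \<in> Cgrp"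
  by (rule sub_cancel[OF C_QZ C_mul[OF f_odd] C_inv[OF f_odd]])
lemma C_canc_r: "c \<in> Cgrp \<Longrightarrow> x \<in> QZ \<Longrightarrow> sd_mul f x c \<in> Cgrp \<longleftrightarrow> x \<in> Cgrp"
  by (rule sub_cancel_r[OF C_QZ C_mul[OF f_odd] C_inv[OF f_odd]])
lemma C6_canc_l: "h \<in> C6Z \<Longrightarrow> x \<in> QZ \<Longrightarrow> sd_mul f h x \<in> C6Z \<longleftrightarrow> x \<in> C6Z"
  by (rule sub_cancel[OF C6_QZ C6_mul C6_inv])

definition F0 :: "mat3 \<times> int \<Rightarrow> complex" where
  "F0 = (\<lambda>x. if x \<in> Cgrp then \<phi>1 x else 0)"

lemma F0_V: "F0 \<in> V"
  unfolding Ind_def mem_Collect_eq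
proof (intro conjI allI impI ballI)
  fix x assume "x \<notin> QZ" then show "F0 x = 0" unfolding F0_def using C_QZ[of x] by auto
next
  fix h x assume h: "h \<in> Cgrp" and x: "x \<in> QZ"
  show "F0 (sd_mul f h x) = \<phi>1 h * F0 x"
    unfolding F0_def using C_canc_l[OF h x] phi1_mul[OF h] by auto
qed

lemma ract_F0: "c \<in> Cgrp \<Longrightarrow> ract f QZ c F0 = (\<lambda>x. \<phi>1 c * F0 x)"
proof (rule ext)
  fix x assume c: "c \<in> Cgrp"
  show "ract f QZ c F0 x = \<phi>1 c * F0 x"
  proof (cases "x \<in> QZ")
    case True
    then show ?thesis unfolding ract_def F0_def using C_canc_r[OF c True] phi1_mul[OF _ c]
      by (auto simp: mult.commute)
  next
    case False
    then show ?thesis unfolding ract_def F0_def using C_QZ[of x] by auto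
  qed
qed

definition G0 :: "mat3 \<times> int \<Rightarrow> complex" where "G0 = \<Psi> F0"

lemma G0_W: "G0 \<in> W" unfolding G0_def by (rule Psi_W[OF F0_V])

lemma G0_right: "c \<in> Cgrp \<Longrightarrow> y \<in> QZ \<Longrightarrow> G0 (sd_mul f y c) = \<phi>1 c * G0 y"
proof -
  assume c: "c \<in> Cgrp" and y: "y \<in> QZ"
  have "ract f QZ c G0 = \<Psi> (ract f QZ c F0)" unfolding G0_def using Psi_equiv[OF C_QZ[OF c] F0_V] by simp
  also have "\<dots> = (\<lambda>y. \<phi>1 c * G0 y)" unfolding ract_F0[OF c] G0_def by (rule Psi_smult[OF F0_V])
  finally have "ract f QZ c G0 y = \<phi>1 c * G0 y" by simp
  then show ?thesis unfolding ract_def using y by simp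
qed

lemma G0_left: "h \<in> C6Z \<Longrightarrow> y \<in> QZ \<Longrightarrow> G0 (sd_mul f h y) = \<phi>2 h * G0 y"
  by (rule Ind_eq[OF G0_W])

definition Fs :: "nat \<Rightarrow> mat3 \<times> int \<Rightarrow> complex" where "Fs j = ract f QZ (ri j) F0"

lemma Fs_V: "j < 6 \<Longrightarrow> Fs j \<in> V"
  unfolding Fs_def by (rule ract_Ind[OF F0_V ri_QZ C_QZ])

lemma Fs_val: "Fs j x = (if x \<in> QZ \<and> sd_mul f x (ri j) \<in> Cgrp then \<phi>1 (sd_mul f x (ri j)) else 0)"
  unfolding Fs_def ract_def F0_def by simp

lemma decomp_pt:
  assumes F: "F \<in> V" and x: "x \<in> QZ"
  shows "F x = (\<Sum>j<6. F (rr j) * Fs j x)"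
proof -
  obtain j0 where j0: "j0 < 6" "sd_mul f x (ri j0) \<in> Cgrp"
    and u: "\<forall>j<6. sd_mul f x (ri j) \<in> Cgrp \<longrightarrow> j = j0"
    using ind_one[OF D4[OF f_odd x]] by blast
  have "(\<Sum>j<6. F (rr j) * Fs j x) = (\<Sum>j<6. if j = j0 then F (rr j0) * \<phi>1 (sd_mul f x (ri j0)) else 0)"
  proof (rule sum.cong)
    fix j assume "j \<in> {..<6::nat}"
    then have j: "j < 6" by simp
    show "F (rr j) * Fs j x = (if j = j0 then F (rr j0) * \<phi>1 (sd_mul f x (ri j0)) else 0)"
    proof (cases "j = j0")
      case True then show ?thesis using j0 x by (simp add: Fs_val)
    next
      case False
      then have "sd_mul f x (ri j) \<notin> Cgrp" using u j by blast
      then show ?thesis using False by (simp add: Fs_val)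
    qed
  qed simp
  also have "\<dots> = F (rr j0) * \<phi>1 (sd_mul f x (ri j0))" using j0 by simp
  also have "\<dots> = F (sd_mul f (sd_mul f x (ri j0)) (rr j0))"
    using Ind_eq[OF F j0(2) rr_QZ[OF j0(1)]] by simp
  also have "sd_mul f (sd_mul f x (ri j0)) (rr j0) = x"
    by (simp add: sd_mul_assoc ri_rr[OF j0(1)] e1_right_QZ[OF x])
  finally show ?thesis by simp
qed

lemma decomp: "F \<in> V \<Longrightarrow> F = (\<lambda>x. \<Sum>j<6. F (rr j) * Fs j x)"
proof (rule ext)
  fix x assume F: "F \<in> V"
  show "F x = (\<Sum>j<6. F (rr j) * Fs j x)"
  proof (cases "x \<in> QZ")
    case True then show ?thesis using decomp_pt[OF F] by simp
  next
    case False then show ?thesis using Ind_out[OF F False] by (simp add: Fs_val)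
  qed
qed

lemma Fs_rr: "j < 6 \<Longrightarrow> k < 6 \<Longrightarrow> Fs j (rr k) = (if j = k then 1 else 0)"
proof -
  assume j: "j < 6" and k: "k < 6"
  obtain j0 where j0: "j0 < 6" "sd_mul f (rr k) (ri j0) \<in> Cgrp"
    and u: "\<forall>j<6. sd_mul f (rr k) (ri j) \<in> Cgrp \<longrightarrow> j = j0"
    using ind_one[OF D4[OF f_odd rr_QZ[OF k]]] by blast
  have kk: "sd_mul f (rr k) (ri k) \<in> Cgrp" using rr_ri[OF k] e1_C by simp
  then have "k = j0" using u k by blast
  show ?thesis
  proof (cases "j = k")
    case True then show ?thesis using kk rr_QZ[OF k] by (simp add: Fs_val rr_ri[OF k] phi1_e1)
  next
    case False
    then have "sd_mul f (rr k) (ri j) \<notin> Cgrp" using u j \<open>k = j0\<close> by blast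
    then show ?thesis using False by (simp add: Fs_val)
  qed
qed

lemma Psi_sum: "(\<And>j. j < (m::nat) \<Longrightarrow> Fs' j \<in> V) \<Longrightarrow>
   \<Psi> (\<lambda>x. \<Sum>j<m. a j * Fs' j x) = (\<lambda>y. \<Sum>j<m. a j * \<Psi> (Fs' j) y)"
proof (induction m)
  case 0
  have "\<Psi> (\<lambda>x. 0 * (0::complex)) = (\<lambda>y. 0 * \<Psi> (\<lambda>x. 0) y)" by (rule Psi_smult[OF Ind_zero])
  then show ?case by simp
next
  case (Suc m)
  have A: "(\<lambda>x. \<Sum>j<m. a j * Fs' j x) \<in> V" using Suc.prems by (intro Ind_sum) simp
  have B: "(\<lambda>x. a m * Fs' m x) \<in> V" using Suc.prems by (simp add: Ind_smult)
  have "\<Psi> (\<lambda>x. \<Sum>j<Suc m. a j * Fs' j x) = \<Psi> (\<lambda>x. (\<Sum>j<m. a j * Fs' j x) + a m * Fs' m x)"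
    by simp
  also have "\<dots> = (\<lambda>y. \<Psi> (\<lambda>x. \<Sum>j<m. a j * Fs' j x) y + \<Psi> (\<lambda>x. a m * Fs' m x) y)"
    by (rule Psi_add[OF A B])
  also have "\<dots> = (\<lambda>y. \<Sum>j<Suc m. a j * \<Psi> (Fs' j) y)"
    using Suc by (simp add: Psi_smult)
  finally show ?case .
qed

lemma Psi_formula:
  assumes F: "F \<in> V" and y: "y \<in> QZ"
  shows "\<Psi> F y = (\<Sum>j<6. F (rr j) * G0 (sd_mul f y (ri j)))"
proof -
  have "\<Psi> F = \<Psi> (\<lambda>x. \<Sum>j<6. F (rr j) * Fs j x)" using decomp[OF F] by simp
  also have "\<dots> = (\<lambda>y. \<Sum>j<6. F (rr j) * \<Psi> (Fs j) y)" by (rule Psi_sum[OF Fs_V])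
  finally have "\<Psi> F y = (\<Sum>j<6. F (rr j) * \<Psi> (Fs j) y)" by simp
  also have "\<dots> = (\<Sum>j<6. F (rr j) * G0 (sd_mul f y (ri j)))"
  proof (rule sum.cong)
    fix j assume "j \<in> {..<6::nat}"
    then have j: "j < 6" by simp
    have "\<Psi> (Fs j) = ract f QZ (ri j) G0" unfolding Fs_def G0_def by (rule Psi_equiv[OF ri_QZ[OF j] F0_V])
    then show "F (rr j) * \<Psi> (Fs j) y = F (rr j) * G0 (sd_mul f y (ri j))" unfolding ract_def using y by simp
  qed simp
  finally show ?thesis .
qed

lemma W_zero:
  assumes G: "G \<in> W" and z: "\<forall>k<4. G (ss k) = 0"
  shows "G = (\<lambda>_. 0)"
proof (rule ext)
  fix x show "G x = 0"
  proof (cases "x \<in> QZ")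
    case True
    obtain k where k: "k < 4" "sd_mul f x (si k) \<in> C6Z" using D5[OF f_odd True] by blast
    have "x = sd_mul f (sd_mul f x (si k)) (ss k)"
      by (simp add: sd_mul_assoc si_ss[OF k(1)] e1_right_QZ[OF True])
    then have "G x = \<phi>2 (sd_mul f x (si k)) * G (ss k)"
      using Ind_eq[OF G k(2) ss_QZ[OF k(1)]] by simp
    then show ?thesis using z k by simp
  next
    case False then show ?thesis using Ind_out[OF G] by simp
  qed
qed

end


context L begin

definition qq :: complex where "qq = 2 ^ f"
definition \<alpha> :: complex where "\<alpha> = \<phi>1 (cl 1)"
definition \<beta> :: complex where "\<beta> = \<phi>1 (cl 2)"
definition \<gamma> :: complex where "\<gamma> = \<phi>2 (I3, 1)"
definition DD :: complex where "DD = \<alpha> / \<gamma>"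

lemma qq_of_nat: "of_nat (2 ^ f) = qq" unfolding qq_def by simp
lemma qq_nz: "qq \<noteq> 0" unfolding qq_def by simp

lemma alpha_val: "\<alpha> = \<eta> / qq"
  using phi1_a unfolding \<alpha>_def cl_def qq_of_nat by simp
lemma gamma_val: "\<gamma> = s ^ f / qq"
  using phi2_b unfolding \<gamma>_def qq_of_nat by simp

lemma I2_C: "(I3, 2) \<in> Cgrp" unfolding C_gm Ct_def C4t_def by simp

lemma alpha_sq: "\<alpha> * \<alpha> = \<beta> * (- 1 / qq)"
proof -
  have c1: "cl 1 \<in> Cgrp" "cl 2 \<in> Cgrp" using cl_C by auto
  have "\<alpha> * \<alpha> = \<phi>1 (sd_mul f (cl 1) (cl 1))" unfolding \<alpha>_def using phi1_mul[OF c1(1) c1(1)] by simp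
  also have "\<dots> = \<phi>1 (sd_mul f (cl 2) (I3, 2))" using cl_sq[OF f_odd] by simp
  also have "\<dots> = \<beta> * \<phi>1 (I3, 2)" unfolding \<beta>_def using phi1_mul[OF c1(2) I2_C] by simp
  also have "\<phi>1 (I3, 2) = - 1 / qq" using phi1_b qq_of_nat by simp
  finally show ?thesis .
qed

lemma s_nz: "s \<noteq> 0" using s_sqrt by auto

lemma s2f: "s ^ (2 * f) = - qq"
proof -
  have "s ^ (2 * f) = (s ^ 2) ^ f" by (simp add: power_mult)
  also have "\<dots> = (- 2) ^ f" using s_sqrt by simp
  also have "\<dots> = - (2 ^ f)" using f_odd by simp
  finally show ?thesis unfolding qq_def .
qed

lemma gamma_sq: "\<gamma> * \<gamma> * qq = -1"
proof -
  have p: "s ^ f * s ^ f = s ^ (2 * f)" by (simp add: power_add[symmetric] mult_2)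
  have "\<gamma> * \<gamma> * qq = s ^ (2 * f) / qq" unfolding gamma_val p[symmetric] using qq_nz
    by (simp add: field_simps power2_eq_square)
  then show ?thesis using s2f qq_nz by simp
qed

lemma gamma_nz: "\<gamma> \<noteq> 0" using gamma_sq by auto

lemma alpha_D: "\<alpha> = DD * \<gamma>" unfolding DD_def using gamma_nz by simp

lemma D_sq: "DD ^ 2 = \<beta>"
proof -
  have "DD * DD * (\<gamma> * \<gamma> * qq) = \<alpha> * \<alpha> * qq" unfolding alpha_D by (simp add: algebra_simps)
  also have "\<dots> = - \<beta>" unfolding alpha_sq using qq_nz by simp
  finally show ?thesis unfolding gamma_sq by (simp add: power2_eq_square)
qed

lemma D_quad: "DD ^ 2 + s * DD - 1 = 0"
proof -
  have e: "\<eta> = DD * \<gamma> * qq" using alpha_val alpha_D qq_nz by (simp add: field_simps)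
  have sf: "s ^ (f + 1) = s * \<gamma> * qq" unfolding gamma_val using qq_nz by simp
  have "0 = \<eta> ^ 2 + s ^ (f + 1) * \<eta> + qq" using eta qq_of_nat by simp
  also have "\<dots> = qq * ((\<gamma> * \<gamma> * qq) * DD ^ 2 + (\<gamma> * \<gamma> * qq) * s * DD + 1)"
    unfolding e sf by (simp add: algebra_simps power2_eq_square)
  also have "\<dots> = qq * (1 - DD ^ 2 - s * DD)" unfolding gamma_sq by (simp add: algebra_simps)
  finally have "1 - DD ^ 2 - s * DD = 0" using qq_nz by simp
  then show ?thesis by (simp add: algebra_simps)
qed

lemma D4: "DD ^ 4 = -1"
proof -
  have q: "DD ^ 2 = 1 - s * DD" using D_quad by (simp add: algebra_simps)
  have "DD ^ 4 = (DD ^ 2) ^ 2" by simp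
  also have "\<dots> = (1 - s * DD) ^ 2" unfolding q ..
  also have "\<dots> = 1 - 2 * s * DD + s ^ 2 * DD ^ 2" by (simp add: power2_eq_square algebra_simps)
  also have "\<dots> = 1 - 2 * s * DD - 2 * (1 - s * DD)" unfolding s_sqrt q by simp
  also have "\<dots> = -1" by (simp add: algebra_simps)
  finally show ?thesis .
qed

end


context L begin

lemma phi_I: "\<phi> I3 = 1"
proof -
  have I: "I3 \<in> C4" unfolding C4_list by simp
  have m: "mat_mul I3 I3 = I3" by (simp add: gmat_mul f4_pow2)
  show ?thesis using phi_char I m idem1 by metis
qed

lemma phi2_a0: "a \<noteq> f4_zero \<Longrightarrow> \<phi>2 (gmat a f4_zero f4_zero, 0) = 1"
proof -
  assume a: "a \<noteq> f4_zero"
  have z: "I3 \<in> Zgrp" unfolding Zgrp_def by simp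
  have c: "gmat a f4_zero f4_zero \<in> C3" unfolding C3_def using a by blast
  have m: "mat_mul I3 (gmat a f4_zero f4_zero) = gmat a f4_zero f4_zero" by (simp add: gmat_mul f4_pow2)
  show ?thesis using phi2_C6 z c m phi_I by metis
qed

lemma C6_gm0: "a \<noteq> f4_zero \<Longrightarrow> (gmat a f4_zero f4_zero, n) \<in> C6Z"
  unfolding C6Z_gm C6t_def by simp

lemma phi2_Im1: "\<phi>2 (I3, -1) = 1 / \<gamma>"
proof -
  have a: "(I3, 1) \<in> C6Z" "(I3, -1) \<in> C6Z" using C6_gm0[of f4_one] by (simp_all add: f4c)
  have "sd_mul f (I3, 1) (I3, -1) = e1" by (simp add: e1_def sd_mul_gmat Let_def f4_pow2 frob_gmat gmat_mul frobq_eq)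
  then have "\<gamma> * \<phi>2 (I3, -1) = 1" unfolding \<gamma>_def using phi2_mul[OF a] phi2_e1 by simp
  then show ?thesis using gamma_nz by (simp add: field_simps)
qed

lemma one_nz: "f4_one \<noteq> f4_zero" by (simp add: f4c)

lemma phi2_am1: "a \<noteq> f4_zero \<Longrightarrow> \<phi>2 (gmat a f4_zero f4_zero, -1) = 1 / \<gamma>"
proof -
  assume a: "a \<noteq> f4_zero"
  have e: "sd_mul f (gmat a f4_zero f4_zero, 0) (I3, -1) = (gmat a f4_zero f4_zero, -1)"
    by (simp add: sd_mul_gmat Let_def f4_pow2 frob_gmat gmat_mul frobq_eq)
  have "\<phi>2 (sd_mul f (gmat a f4_zero f4_zero, 0) (I3, -1)) = \<phi>2 (gmat a f4_zero f4_zero, 0) * \<phi>2 (I3, -1)"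
    by (rule phi2_mul[OF C6_gm0[OF a] C6_gm0[OF one_nz]])
  then show ?thesis unfolding e phi2_a0[OF a] phi2_Im1 by simp
qed

lemma phi1_cl:
  "\<phi>1 (cl 0) = 1" "\<phi>1 (cl 1) = \<alpha>" "\<phi>1 (cl 2) = \<beta>" "\<phi>1 (cl 3) = \<beta> * \<alpha>"
  "\<phi>1 (cl 4) = \<beta> * \<beta>" "\<phi>1 (cl 5) = \<beta> * \<beta> * \<alpha>" "\<phi>1 (cl 6) = \<beta> * \<beta> * \<beta>"
  "\<phi>1 (cl 7) = \<beta> * \<beta> * \<beta> * \<alpha>"
proof -
  have c: "cl i \<in> Cgrp" if "i < 8" for i using cl_C that by simp
  show "\<phi>1 (cl 0) = 1" using phi1_e1 cl0 by simp
  show "\<phi>1 (cl 1) = \<alpha>" unfolding \<alpha>_def ..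
  show "\<phi>1 (cl 2) = \<beta>" unfolding \<beta>_def ..
  show "\<phi>1 (cl 3) = \<beta> * \<alpha>" using phi1_mul[OF c c, of 2 1] cl_prod unfolding \<alpha>_def \<beta>_def by simp
  show c4: "\<phi>1 (cl 4) = \<beta> * \<beta>" using phi1_mul[OF c c, of 2 2] cl_prod unfolding \<beta>_def by simp
  show "\<phi>1 (cl 5) = \<beta> * \<beta> * \<alpha>" using phi1_mul[OF c c, of 4 1] cl_prod c4 unfolding \<alpha>_def by simp
  show c6: "\<phi>1 (cl 6) = \<beta> * \<beta> * \<beta>" using phi1_mul[OF c c, of 4 2] cl_prod c4 unfolding \<beta>_def by simp
  show "\<phi>1 (cl 7) = \<beta> * \<beta> * \<beta> * \<alpha>" using phi1_mul[OF c c, of 6 1] cl_prod c6 unfolding \<alpha>_def by simp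
qed

lemma coef: "i < 8 \<Longrightarrow> a \<noteq> f4_zero \<Longrightarrow> \<phi>2 (gmat a f4_zero f4_zero, - int (i mod 2)) * \<phi>1 (cl i) = DD ^ i"
proof -
  assume i: "i < 8" and a: "a \<noteq> f4_zero"
  have b: "\<beta> = DD * DD" using D_sq by (simp add: power2_eq_square)
  have al: "\<alpha> = DD * \<gamma>" by (rule alpha_D)
  note g = gamma_nz
  have v: "\<phi>1 (cl 0) = DD ^ 0" "\<phi>1 (cl 1) = DD ^ 1 * \<gamma>" "\<phi>1 (cl 2) = DD ^ 2"
    "\<phi>1 (cl 3) = DD ^ 3 * \<gamma>" "\<phi>1 (cl 4) = DD ^ 4" "\<phi>1 (cl 5) = DD ^ 5 * \<gamma>"
    "\<phi>1 (cl 6) = DD ^ 6" "\<phi>1 (cl 7) = DD ^ 7 * \<gamma>"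
    unfolding phi1_cl b al by (simp_all add: eval_nat_numeral algebra_simps)
  have m: "- int (0 mod 2) = 0" "- int (1 mod 2) = -1" "- int (2 mod 2) = 0" "- int (3 mod 2) = -1"
    "- int (4 mod 2) = 0" "- int (5 mod 2) = -1" "- int (6 mod 2) = 0" "- int (7 mod 2) = -1" by simp_all
  show ?thesis using i unfolding less8
    by (elim disjE) (simp_all only: v m phi2_a0[OF a] phi2_am1[OF a], simp_all add: g)
qed

definition gg :: complex where "gg = G0 e1"

lemma G0val: "k < 4 \<Longrightarrow> j < 6 \<Longrightarrow> G0 (sd_mul f (ss k) (ri j)) = DD ^ (Et k j) * gg"
proof -
  assume k: "k < 4" and j: "j < 6"
  define E where "E = Et k j"
  have E8: "E < 8" unfolding E_def using Et_lt[OF k j] .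
  have ha: "ha j \<noteq> f4_zero" unfolding ha_def by (simp add: f4c)
  have h: "(gmat (ha j) f4_zero f4_zero, - int (E mod 2)) \<in> C6Z" using C6_gm0[OF ha] .
  have c: "cl E \<in> Cgrp" using cl_C[OF E8] .
  have "G0 (sd_mul f (ss k) (ri j)) = G0 (sd_mul f (gmat (ha j) f4_zero f4_zero, - int (E mod 2)) (cl E))"
    unfolding E_def using chain[OF f_odd k j] by simp
  also have "\<dots> = \<phi>2 (gmat (ha j) f4_zero f4_zero, - int (E mod 2)) * G0 (cl E)"
    by (rule G0_left[OF h C_QZ[OF c]])
  also have "G0 (cl E) = \<phi>1 (cl E) * gg"
    using G0_right[OF c e1_QZ] e1_left_QZ[OF C_QZ[OF c]] unfolding gg_def by simp
  finally show ?thesis using coef[OF E8 ha] unfolding E_def by (simp add: mult.assoc)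
qed

lemma Psi_ss: "F \<in> V \<Longrightarrow> k < 4 \<Longrightarrow> \<Psi> F (ss k) = gg * (\<Sum>j<6. F (rr j) * DD ^ (Et k j))"
proof -
  assume F: "F \<in> V" and k: "k < 4"
  have "\<Psi> F (ss k) = (\<Sum>j<6. F (rr j) * G0 (sd_mul f (ss k) (ri j)))" by (rule Psi_formula[OF F ss_QZ[OF k]])
  also have "\<dots> = (\<Sum>j<6. gg * (F (rr j) * DD ^ (Et k j)))"
    by (rule sum.cong) (simp_all add: G0val[OF k])
  finally show ?thesis by (simp add: sum_distrib_left)
qed

definition H0 :: "mat3 \<times> int \<Rightarrow> complex" where
  "H0 = (\<lambda>x. if x \<in> C6Z then \<phi>2 x else 0)"

lemma H0_W: "H0 \<in> W"
  unfolding Ind_def mem_Collect_eq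
proof (intro conjI allI impI ballI)
  fix x assume "x \<notin> QZ" then show "H0 x = 0" unfolding H0_def using C6_QZ[of x] by auto
next
  fix h x assume h: "h \<in> C6Z" and x: "x \<in> QZ"
  show "H0 (sd_mul f h x) = \<phi>2 h * H0 x"
    unfolding H0_def using C6_canc_l[OF h x] phi2_mul[OF h] by auto
qed

lemma gg_nz: "gg \<noteq> 0"
proof
  assume g0: "gg = 0"
  have "\<Psi> F = (\<lambda>_. 0)" if F: "F \<in> V" for F
    using W_zero[OF Psi_W[OF F]] Psi_ss[OF F] g0 by simp
  moreover obtain F where "F \<in> V" "\<Psi> F = H0" using H0_W Psi_surj by (metis imageE)
  ultimately have "H0 = (\<lambda>_. 0)" by metis
  then have "H0 e1 = 0" by simp
  then show False unfolding H0_def using e1_C6 phi2_e1 by simp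
qed

lemma crit: "F \<in> V \<Longrightarrow> \<Psi> F = (\<lambda>_. 0) \<longleftrightarrow> (\<forall>k<4. (\<Sum>j<6. F (rr j) * DD ^ (Et k j)) = 0)"
proof
  assume F: "F \<in> V" and z: "\<Psi> F = (\<lambda>_. 0)"
  show "\<forall>k<4. (\<Sum>j<6. F (rr j) * DD ^ (Et k j)) = 0"
  proof (intro allI impI)
    fix k :: nat assume k: "k < 4"
    have "gg * (\<Sum>j<6. F (rr j) * DD ^ (Et k j)) = 0" using Psi_ss[OF F k] z by metis
    then show "(\<Sum>j<6. F (rr j) * DD ^ (Et k j)) = 0" using gg_nz by simp
  qed
next
  assume F: "F \<in> V" and h: "\<forall>k<4. (\<Sum>j<6. F (rr j) * DD ^ (Et k j)) = 0"
  show "\<Psi> F = (\<lambda>_. 0)" using W_zero[OF Psi_W[OF F]] Psi_ss[OF F] h by simp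
qed

end


context L begin

lemma rr0: "rr 0 = e1" by (simp add: rr_def e1_def)
lemma rr1_Q8: "rr 1 \<in> Q8Z" by (simp add: rr_def Q8Z_gm Qt_def f4_pow2 f4_pow3 f4c)
lemma rr0_Q8: "rr 0 \<in> Q8Z" using e1_Q8 rr0 by simp

lemma det_Q8:
  assumes G: "G \<in> Ind f Cgrp \<phi>1 X" and X: "e1 \<in> X" "rr 1 \<in> X" and x: "x \<in> Q8Z"
  shows "G x = (if x \<in> Cgrp then \<phi>1 x * G (rr 0) else \<phi>1 (sd_mul f x (ri 1)) * G (rr 1))"
proof -
  have xq: "x \<in> QZ" using Q8Z_QZ[OF x] .
  show ?thesis
  proof (cases "x \<in> Cgrp")
    case True
    have "G (sd_mul f x e1) = \<phi>1 x * G e1" by (rule Ind_eq[OF G True X(1)])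
    then show ?thesis using True e1_right_QZ[OF xq] rr0 by simp
  next
    case False
    then have c: "sd_mul f x (ri 1) \<in> Cgrp" using D8[OF f_odd x] by simp
    have "G (sd_mul f (sd_mul f x (ri 1)) (rr 1)) = \<phi>1 (sd_mul f x (ri 1)) * G (rr 1)"
      by (rule Ind_eq[OF G c X(2)])
    moreover have "sd_mul f (sd_mul f x (ri 1)) (rr 1) = x"
      by (simp add: sd_mul_assoc ri_rr e1_right_QZ[OF xq])
    ultimately show ?thesis using False by simp
  qed
qed

definition Phi :: "(mat3 \<times> int \<Rightarrow> complex) \<Rightarrow> (mat3 \<times> int \<Rightarrow> complex)" where
  "Phi F = (\<lambda>x. if x \<in> Q8Z then F x else 0)"

abbreviation "K \<equiv> {F \<in> V. \<Psi> F = (\<lambda>_. 0)}"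

lemma Phi_V0: assumes F: "F \<in> V" shows "Phi F \<in> V0"
  unfolding Ind_def mem_Collect_eq
proof (intro conjI allI impI ballI)
  fix x :: "mat3 \<times> int" assume "x \<notin> Q8Z" then show "Phi F x = 0" unfolding Phi_def by simp
next
  fix h x assume h: "h \<in> Cgrp" and x: "x \<in> Q8Z"
  have hx: "sd_mul f h x \<in> Q8Z" using Q8Z_mul[OF C_Q8Z[OF h] x] .
  show "Phi F (sd_mul f h x) = \<phi>1 h * Phi F x"
    unfolding Phi_def using hx x Ind_eq[OF F h Q8Z_QZ[OF x]] by simp
qed

lemma K_diff: "F1 \<in> K \<Longrightarrow> F2 \<in> K \<Longrightarrow> (\<lambda>x. F1 x + (-1) * F2 x) \<in> K"
proof -
  assume a: "F1 \<in> K" "F2 \<in> K"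
  have m: "(\<lambda>x. (-1) * F2 x) \<in> V" using a Ind_smult by blast
  have "\<Psi> (\<lambda>x. (-1) * F2 x) = (\<lambda>y. (-1) * \<Psi> F2 y)" using a Psi_smult by blast
  then have z: "\<Psi> (\<lambda>x. (-1) * F2 x) = (\<lambda>_. 0)" using a by simp
  have "\<Psi> (\<lambda>x. F1 x + (-1) * F2 x) = (\<lambda>y. \<Psi> F1 y + \<Psi> (\<lambda>x. (-1) * F2 x) y)"
    using Psi_add[of F1 "\<lambda>x. (-1) * F2 x"] a m by simp
  then show ?thesis using a z m Ind_add[of F1 f Cgrp \<phi>1 QZ "\<lambda>x. (-1) * F2 x"] by simp
qed

lemma K_inj: "inj_on Phi K"
proof (rule inj_onI)
  fix F1 F2 assume a: "F1 \<in> K" "F2 \<in> K" and e: "Phi F1 = Phi F2"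
  define Fd where "Fd = (\<lambda>x. F1 x + (-1) * F2 x)"
  have Fd: "Fd \<in> K" unfolding Fd_def by (rule K_diff[OF a])
  have p0: "F1 (rr 0) = F2 (rr 0)" using fun_cong[OF e, of "rr 0"] rr0_Q8 unfolding Phi_def by simp
  have p1: "F1 (rr 1) = F2 (rr 1)" using fun_cong[OF e, of "rr 1"] rr1_Q8 unfolding Phi_def by simp
  have "\<forall>k<4. (\<Sum>j<6. Fd (rr j) * DD ^ (Et k j)) = 0" using Fd crit by blast
  then have z: "\<forall>j<6. Fd (rr j) = 0"
    by (rule LA_a[OF D4]) (simp_all add: Fd_def p0 p1 p1[simplified])
  have "Fd = (\<lambda>x. \<Sum>j<6. Fd (rr j) * Fs j x)" using decomp Fd by blast
  also have "\<dots> = (\<lambda>x. 0)" using z by simp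
  finally have "\<And>x. F1 x + (-1) * F2 x = 0" unfolding Fd_def by metis
  then show "F1 = F2" by (intro ext) (simp add: algebra_simps)
qed

lemma K_surj: "G \<in> V0 \<Longrightarrow> G \<in> Phi ` K"
proof -
  assume G: "G \<in> V0"
  define v where "v = (\<lambda>j. kw DD (G (rr 0)) (G (rr 1)) j / 2)"
  define F where "F = (\<lambda>x. \<Sum>j<6. v j * Fs j x)"
  have FV: "F \<in> V" unfolding F_def by (rule Ind_sum[OF Fs_V])
  have Fr: "F (rr k) = v k" if k: "k < 6" for k
  proof -
    have "F (rr k) = (\<Sum>j<6. if j = k then v k else 0)"
      unfolding F_def by (rule sum.cong) (simp_all add: Fs_rr k)
    also have "\<dots> = v k" using k by simp
    finally show ?thesis .
  qed
  have "\<forall>k<4. (\<Sum>j<6. F (rr j) * DD ^ (Et k j)) = 0"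
  proof (intro allI impI)
    fix k :: nat assume k: "k < 4"
    have "(\<Sum>j<6. F (rr j) * DD ^ (Et k j)) = (\<Sum>j<6. kw DD (G (rr 0)) (G (rr 1)) j * DD ^ (Et k j)) / 2"
      by (simp add: Fr v_def sum_divide_distrib)
    also have "\<dots> = 0" using LA_b[OF D4 k] by simp
    finally show "(\<Sum>j<6. F (rr j) * DD ^ (Et k j)) = 0" .
  qed
  then have FK: "F \<in> K" using crit FV by blast
  have v0: "F (rr 0) = G (rr 0)" using Fr[of 0] by (simp add: v_def kw_def)
  have v1: "F (rr 1) = G (rr 1)" using Fr[of 1] by (simp add: v_def kw_def)
  have "Phi F = G"
  proof (rule ext)
    fix x show "Phi F x = G x"
    proof (cases "x \<in> Q8Z")
      case True
      have "F x = G x"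
        using det_Q8[OF FV e1_QZ rr_QZ True] det_Q8[OF G e1_Q8 rr1_Q8 True] v0 v1 by simp
      then show ?thesis using True unfolding Phi_def by simp
    next
      case False then show ?thesis unfolding Phi_def using Ind_out[OF G False] by simp
    qed
  qed
  then show ?thesis using FK by blast
qed

lemma main: "\<exists>\<Phi>. rep_iso Q8Z (ract f QZ) (ract f Q8Z) K V0 \<Phi>"
proof (intro exI)
  show "rep_iso Q8Z (ract f QZ) (ract f Q8Z) K V0 Phi"
    unfolding rep_iso_def rep_hom_def
  proof (intro conjI ballI allI)
    fix F assume "F \<in> K" then show "Phi F \<in> V0" using Phi_V0 by blast
  next
    fix F1 F2 :: "mat3 \<times> int \<Rightarrow> complex"
    show "Phi (\<lambda>x. F1 x + F2 x) = (\<lambda>y. Phi F1 y + Phi F2 y)" unfolding Phi_def by auto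
  next
    fix c :: complex and F :: "mat3 \<times> int \<Rightarrow> complex"
    show "Phi (\<lambda>x. c * F x) = (\<lambda>y. c * Phi F y)" unfolding Phi_def by auto
  next
    fix g F assume g: "g \<in> Q8Z" and F: "F \<in> K"
    show "Phi (ract f QZ g F) = ract f Q8Z g (Phi F)"
    proof (rule ext)
      fix x
      show "Phi (ract f QZ g F) x = ract f Q8Z g (Phi F) x"
        unfolding Phi_def ract_def using Q8Z_QZ[of x] Q8Z_mul[OF _ g, of x] by auto
    qed
  next
    show "bij_betw Phi K V0"
      unfolding bij_betw_def using K_inj K_surj Phi_V0 by blast
  qed
qed

end

theorem lemma3p2:
  fixes f :: nat and s \<eta> :: complex
    and \<phi> :: "mat3 \<Rightarrow> complex"
    and \<phi>1 \<phi>2 :: "mat3 \<times> int \<Rightarrow> complex"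
    and \<Psi> :: "(mat3 \<times> int \<Rightarrow> complex) \<Rightarrow> (mat3 \<times> int \<Rightarrow> complex)"
  assumes f_odd: "odd f"
    and s_sqrt: "s ^ 2 = -2"
    and eta: "\<eta> ^ 2 + s ^ (f + 1) * \<eta> + of_nat (2 ^ f) = 0"
    and phi_char: "(\<forall>x\<in>C4. \<phi> x \<noteq> 0) \<and> (\<forall>x\<in>C4. \<forall>y\<in>C4. \<phi> (mat_mul x y) = \<phi> x * \<phi> y)"
    and phi_faithful: "inj_on \<phi> C4"
    and phi1_char: "is_character f Cgrp \<phi>1"
    and phi1_a: "\<phi>1 (gmat f4_one f4_zeta f4_zeta, 1) = \<eta> / of_nat (2 ^ f)"
    and phi1_b: "\<phi>1 (gmat f4_one f4_zero f4_zero, 2) = - 1 / of_nat (2 ^ f)"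
    and phi2_char: "is_character f C6Z \<phi>2"
    and phi2_C6: "\<forall>z\<in>Zgrp. \<forall>c\<in>C3. \<phi>2 (mat_mul z c, 0) = \<phi> z"
    and phi2_b: "\<phi>2 (gmat f4_one f4_zero f4_zero, 1) = s ^ f / of_nat (2 ^ f)"
    and Psi_hom: "rep_hom QZ (ract f QZ) (ract f QZ) (Ind f Cgrp \<phi>1 QZ) (Ind f C6Z \<phi>2 QZ) \<Psi>"
    and Psi_surj: "\<Psi> ` Ind f Cgrp \<phi>1 QZ = Ind f C6Z \<phi>2 QZ"
  shows "\<exists>\<Phi>. rep_iso Q8Z (ract f QZ) (ract f Q8Z)
              {F \<in> Ind f Cgrp \<phi>1 QZ. \<Psi> F = (\<lambda>_. 0)} (Ind f Cgrp \<phi>1 Q8Z) \<Phi>"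
proof -
  interpret L f s \<eta> \<phi> \<phi>1 \<phi>2 \<Psi>
    by (rule L.intro) (fact f_odd s_sqrt eta phi_char phi_faithful phi1_char phi1_a phi1_b
      phi2_char phi2_C6 phi2_b Psi_hom Psi_surj)+
  show ?thesis by (rule main)
qed


end
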